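(* Let $G$ be a finite graph with ordered edges and let $H^i(G)$ be the cohomology of its chain complex $\mathcal{C}(G)$ (defined in the context). Then $$\sum_{i\ge 0}(-1)^i\, q\dim H^i(G) \;=\; P_G(1+q),$$ where $P_G(\lambda)$ is the chromatic polynomial of $G$.
   Context: Graphs are finite; loops and multiple edges are allowed. $P_G(\lambda)$ is the chromatic polynomial: for a positive integer $\lambda$, $P_G(\lambda)$ is the number of assignments of colors $\{1,\dots,\lambda\}$ to vertices such that the endpoints of every edge receive different colors (equivalently $P_G(\lambda)=\sum_{s\subseteq E}(-1)^{|s|}\lambda^{k(s)}$, $k(s)$ the number of components of $[G:s]$). For a graded $\mathbb{Z}$-module $\mathcal{M}=\bigoplus_j M_j$, $q\dim\mathcal{M}=\sum_j q^j\operatorname{rank}(M_j)$ with $\operatorname{rank}(M_j)=\dim_{\mathbb{Q}}(M_j\otimes\mathbb{Q})$. For $G=(V,E)$ and $s\subseteq E$, $[G:s]$ is the spanning subgraph with edge set $s$. With $1*1=1$, $1*x=x*1=x$, $x*x=0$: an enhanced state is $S=(s,c)$, $s\subseteq E$, $c$ assigning $1$ or $x$ to each component of $[G:s]$; $i(S)=|s|$, $j(S)=$ number of components colored $x$. $C^{i,j}(G)$ is free abelian on enhanced states with $i(S)=i,j(S)=j$; $C^i(G)=\bigoplus_jC^{i,j}(G)$ graded by $j$. For an ordering of the edges, $d(S)=\sum_{e\in E\setminus s}(-1)^{n(e)}S_e$, $n(e)$ the number of edges of $s$ before $e$; $S_e=(s\cup\{e\},c_e)$ where, if $e$ joins a component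 to itself, colors are unchanged, and if $e$ joins distinct components $E_1,E_2$ the merged component gets $c(E_1)*c(E_2)$ (and $S_e=0$ if this product is $0$). $H^{i,j}(G)$ is the cohomology of $(C^{\bullet,j}(G),d)$ and $H^i(G)=\bigoplus_j H^{i,j}(G)$, graded by $j$. *)

theory Defs
  imports "HOL-Computational_Algebra.Polynomial"
begin

text \<open>A finite graph (loops and multiple edges allowed) is given by a finite vertex
set V and a list of edges es; edge number k (k < length es) joins fst (es!k) and
snd (es!k).  The list order is the ordering of the edges.  A subset s of edges is
a set of edge indices s \<subseteq> {..<length es}.\<close>

definition edge_rel :: "('v \<times> 'v) list \<Rightarrow> nat set \<Rightarrow> ('v \<times> 'v) set" where
  "edge_rel es s = {(fst (es!k), snd (es!k)) | k. k \<in> s \<and> k < length es}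
                 \<union> {(snd (es!k), fst (es!k)) | k. k \<in> s \<and> k < length es}"

definition comp_rel :: "'v set \<Rightarrow> ('v \<times> 'v) list \<Rightarrow> nat set \<Rightarrow> ('v \<times> 'v) set" where
  "comp_rel V es s = {(u, w). u \<in> V \<and> w \<in> V \<and> (u, w) \<in> (edge_rel es s)\<^sup>*}"

definition comps :: "'v set \<Rightarrow> ('v \<times> 'v) list \<Rightarrow> nat set \<Rightarrow> 'v set set" where
  "comps V es s = V // comp_rel V es s"

definition comp_of :: "'v set \<Rightarrow> ('v \<times> 'v) list \<Rightarrow> nat set \<Rightarrow> 'v \<Rightarrow> 'v set" where
  "comp_of V es s v = comp_rel V es s `` {v}"

definition chromatic_poly :: "'v set \<Rightarrow> ('v \<times> 'v) list \<Rightarrow> int poly" where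
  "chromatic_poly V es =
     (\<Sum>s\<in>Pow {..<length es}. monom ((-1) ^ card s) (card (comps V es s)))"

text \<open>Enhanced states: (s, X) where X is the set of components of [G:s] coloured x
(the remaining components are coloured 1).  i(S) = card s, j(S) = card X.\<close>
type_synonym 'v state = "nat set \<times> 'v set set"

definition states :: "'v set \<Rightarrow> ('v \<times> 'v) list \<Rightarrow> nat \<Rightarrow> nat \<Rightarrow> 'v state set" where
  "states V es i j = {(s, X). s \<subseteq> {..<length es} \<and> X \<subseteq> comps V es s
                              \<and> card s = i \<and> card X = j}"

text \<open>S_e: None encodes the zero result (x*x = 0).\<close>
definition state_e :: "'v set \<Rightarrow> ('v \<times> 'v) list \<Rightarrow> 'v state \<Rightarrow> nat \<Rightarrow> 'v state option" where
  "state_e V es S e =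
     (let s = fst S; X = snd S;
          C1 = comp_of V es s (fst (es!e)); C2 = comp_of V es s (snd (es!e))
      in if C1 = C2 then Some (insert e s, X)
         else if C1 \<in> X \<and> C2 \<in> X then None
         else if C1 \<in> X \<or> C2 \<in> X then Some (insert e s, insert (C1 \<union> C2) (X - {C1, C2}))
         else Some (insert e s, X - {C1, C2}))"

definition nbefore :: "nat set \<Rightarrow> nat \<Rightarrow> nat" where
  "nbefore s e = card {k \<in> s. k < e}"

text \<open>Chains: integer-valued functions on states (finite formal Z-combinations).
C^{i,j}(G) is the set of chains supported on the states of bidegree (i,j).\<close>
type_synonym 'v chain = "'v state \<Rightarrow> int"

definition chains :: "'v set \<Rightarrow> ('v \<times> 'v) list \<Rightarrow> nat \<Rightarrow> nat \<Rightarrow> 'v chain set" where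
  "chains V es i j = {f. \<forall>T. f T \<noteq> 0 \<longrightarrow> T \<in> states V es i j}"

definition diff :: "'v set \<Rightarrow> ('v \<times> 'v) list \<Rightarrow> 'v chain \<Rightarrow> 'v chain" where
  "diff V es f = (\<lambda>T. \<Sum>S\<in>{S. S \<in> (\<Union>i j. states V es i j)}.
       \<Sum>e\<in>{e. e < length es \<and> e \<notin> fst S}.
          (if state_e V es S e = Some T then f S * (-1) ^ nbefore (fst S) e else 0))"

definition cycles :: "'v set \<Rightarrow> ('v \<times> 'v) list \<Rightarrow> nat \<Rightarrow> nat \<Rightarrow> 'v chain set" where
  "cycles V es i j = {f \<in> chains V es i j. diff V es f = (\<lambda>_. 0)}"

definition boundaries :: "'v set \<Rightarrow> ('v \<times> 'v) list \<Rightarrow> nat \<Rightarrow> nat \<Rightarrow> 'v chain set" where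
  "boundaries V es i j = (if i = 0 then {\<lambda>_. 0} else diff V es ` chains V es (i - 1) j)"

text \<open>Rank of the quotient Z-module A/B (B \<subseteq> A submodules of chains): the maximal
number of elements of A whose classes in A/B are Z-linearly independent
(= dim_Q (A/B \<otimes> Q)).\<close>
definition quot_rank :: "('a \<Rightarrow> int) set \<Rightarrow> ('a \<Rightarrow> int) set \<Rightarrow> nat" where
  "quot_rank A B = Max {card S | S. finite S \<and> S \<subseteq> A \<and>
      (\<forall>a :: ('a \<Rightarrow> int) \<Rightarrow> int. (\<lambda>T. \<Sum>x\<in>S. a x * x T) \<in> B \<longrightarrow> (\<forall>x\<in>S. a x = 0))}"

definition hom_rank :: "'v set \<Rightarrow> ('v \<times> 'v) list \<Rightarrow> nat \<Rightarrow> nat \<Rightarrow> nat" where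
  "hom_rank V es i j = quot_rank (cycles V es i j) (boundaries V es i j)"

text \<open>q dim H^i(G) as an integer polynomial in q (j \<le> card V covers all degrees).\<close>
definition qdim_H :: "'v set \<Rightarrow> ('v \<times> 'v) list \<Rightarrow> nat \<Rightarrow> int poly" where
  "qdim_H V es i = (\<Sum>j\<le>card V. monom (int (hom_rank V es i j)) j)"

end

theory Submission
  imports Defs "HOL-Library.Function_Algebras"
begin

locale gr =
  fixes V :: "'v set" and es :: "('v \<times> 'v) list"
  assumes finV: "finite V" and esV: "set es \<subseteq> V \<times> V"
begin

abbreviation "rel s \<equiv> comp_rel V es s"
abbreviation "cmp s v \<equiv> comp_of V es s v"

lemma mem_edge_rel: "(x,y) \<in> edge_rel es s \<longleftrightarrow> (\<exists>k\<in>s. k < length es \<and> ((x = fst(es!k) \<and> y = snd(es!k)) \<or> (x = snd(es!k) \<and> y = fst(es!k))))"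
  unfolding edge_rel_def by blast

lemma es_V: "k < length es \<Longrightarrow> fst (es!k) \<in> V \<and> snd (es!k) \<in> V"
proof -
  assume "k < length es"
  then have "es!k \<in> V \<times> V" using esV nth_mem by blast
  then show ?thesis by (simp add: mem_Times_iff)
qed

lemma edge_rel_V: "edge_rel es s \<subseteq> V \<times> V"
proof (rule subrelI)
  fix x y assume "(x,y) \<in> edge_rel es s"
  then obtain k where "k < length es" "(x = fst(es!k) \<and> y = snd(es!k)) \<or> (x = snd(es!k) \<and> y = fst(es!k))"
    unfolding mem_edge_rel by blast
  then show "(x,y) \<in> V \<times> V" using es_V[of k] by auto
qed

lemma sym_edge_rel: "sym (edge_rel es s)"
  unfolding sym_def mem_edge_rel by blast

lemma equiv_rel: "equiv V (rel s)"
proof -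
  have sy: "sym ((edge_rel es s)\<^sup>*)" using sym_edge_rel by (rule sym_rtrancl)
  have "refl_on V (rel s)"
    unfolding refl_on_def comp_rel_def by blast
  moreover have "sym (rel s)"
    using sy unfolding sym_def comp_rel_def by blast
  moreover have "trans (rel s)"
  proof (rule transI)
    fix x y z assume "(x,y) \<in> rel s" "(y,z) \<in> rel s"
    then show "(x,z) \<in> rel s" unfolding comp_rel_def using rtrancl_trans[of x y _ z] by blast
  qed
  moreover have "rel s \<subseteq> V \<times> V" unfolding comp_rel_def by blast
  ultimately show ?thesis unfolding equiv_def by blast
qed

lemma rel_V: "(u,w) \<in> rel s \<Longrightarrow> u \<in> V \<and> w \<in> V"
  unfolding comp_rel_def by auto

lemma cmp_eq_iff: "u \<in> V \<Longrightarrow> w \<in> V \<Longrightarrow> cmp s u = cmp s w \<longleftrightarrow> (u,w) \<in> rel s"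
  unfolding comp_of_def using equiv_class_eq_iff[OF equiv_rel] by blast

lemma mem_cmp: "w \<in> cmp s u \<longleftrightarrow> (u,w) \<in> rel s"
  unfolding comp_of_def by auto

lemma self_cmp: "u \<in> V \<Longrightarrow> u \<in> cmp s u"
  using equiv_rel unfolding mem_cmp equiv_def refl_on_def by auto

lemma comps_eq: "comps V es s = cmp s ` V"
  unfolding comps_def quotient_def comp_of_def by auto

lemma cmp_sub: "cmp s u \<subseteq> V"
  using rel_V mem_cmp by blast

lemma finite_comps: "finite (comps V es s)"
  unfolding comps_eq using finV by simp

lemma card_comps: "card (comps V es s) \<le> card V"
  unfolding comps_eq using finV card_image_le by blast

lemma in_cmp_eq: "u \<in> V \<Longrightarrow> w \<in> cmp s u \<Longrightarrow> cmp s w = cmp s u"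
  using cmp_eq_iff[of u w s] mem_cmp[of w s u] rel_V[of u w s] by simp

lemma edge_rel_mono: "s \<subseteq> s' \<Longrightarrow> edge_rel es s \<subseteq> edge_rel es s'"
proof (rule subrelI)
  fix x y assume "s \<subseteq> s'" "(x,y) \<in> edge_rel es s"
  then show "(x,y) \<in> edge_rel es s'" unfolding mem_edge_rel by blast
qed

lemma rel_mono: "s \<subseteq> s' \<Longrightarrow> rel s \<subseteq> rel s'"
  unfolding comp_rel_def using rtrancl_mono[OF edge_rel_mono] by blast

lemma cmp_mono: "s \<subseteq> s' \<Longrightarrow> u \<in> V \<Longrightarrow> w \<in> V \<Longrightarrow> cmp s u = cmp s w \<Longrightarrow> cmp s' u = cmp s' w"
proof -
  assume a: "s \<subseteq> s'" "u \<in> V" "w \<in> V" "cmp s u = cmp s w"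
  then have "(u,w) \<in> rel s" using cmp_eq_iff by simp
  then have "(u,w) \<in> rel s'" using rel_mono[OF a(1)] by blast
  then show ?thesis using cmp_eq_iff a by simp
qed

lemma edge_rel_insert:
  assumes "e < length es"
  shows "edge_rel es (insert e s) = insert (fst (es!e), snd (es!e)) (insert (snd (es!e), fst (es!e)) (edge_rel es s))"
proof (rule set_eqI)
  fix p :: "'v \<times> 'v"
  obtain x y where p: "p = (x,y)" by (cases p)
  show "p \<in> edge_rel es (insert e s) \<longleftrightarrow> p \<in> insert (fst (es!e), snd (es!e)) (insert (snd (es!e), fst (es!e)) (edge_rel es s))"
    unfolding p insert_iff prod.inject mem_edge_rel using assms by blast
qed

lemma rel_insert:
  assumes e: "e < length es" and a: "a = fst (es!e)" and b: "b = snd (es!e)"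
  shows "(u,w) \<in> rel (insert e s) \<longleftrightarrow> (u,w) \<in> rel s \<or> ((u,a) \<in> rel s \<and> (b,w) \<in> rel s) \<or> ((u,b) \<in> rel s \<and> (a,w) \<in> rel s)"
proof -
  have aV: "a \<in> V" and bV: "b \<in> V" using esV e a b nth_mem by fastforce+
  let ?R = "edge_rel es s"
  have eq: "(edge_rel es (insert e s))\<^sup>* = ?R\<^sup>* \<union> {(x, y). (x, b) \<in> ?R\<^sup>* \<and> (a, y) \<in> ?R\<^sup>*}
      \<union> {(x, y). (x, a) \<in> (?R\<^sup>* \<union> {(x, y). (x, b) \<in> ?R\<^sup>* \<and> (a, y) \<in> ?R\<^sup>*})
            \<and> (b, y) \<in> (?R\<^sup>* \<union> {(x, y). (x, b) \<in> ?R\<^sup>* \<and> (a, y) \<in> ?R\<^sup>*})}"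
    unfolding edge_rel_insert[OF e] a[symmetric] b[symmetric] rtrancl_insert by simp
  have sy: "\<And>x y. (x,y) \<in> ?R\<^sup>* \<Longrightarrow> (y,x) \<in> ?R\<^sup>*"
    using sym_rtrancl[OF sym_edge_rel] unfolding sym_def by blast
  have tr: "\<And>x y z. (x,y) \<in> ?R\<^sup>* \<Longrightarrow> (y,z) \<in> ?R\<^sup>* \<Longrightarrow> (x,z) \<in> ?R\<^sup>*"
    by (rule rtrancl_trans)
  let ?P = "\<lambda>x y. (x,y) \<in> ?R\<^sup>*"
  have "(u,w) \<in> (edge_rel es (insert e s))\<^sup>* \<longleftrightarrow> ?P u w \<or> (?P u a \<and> ?P b w) \<or> (?P u b \<and> ?P a w)"
  proof
    assume "(u,w) \<in> (edge_rel es (insert e s))\<^sup>*"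
    then have "?P u w \<or> (?P u b \<and> ?P a w) \<or> ((?P u a \<or> (?P u b \<and> ?P a a)) \<and> (?P b w \<or> (?P b b \<and> ?P a w)))"
      unfolding eq by blast
    then show "?P u w \<or> (?P u a \<and> ?P b w) \<or> (?P u b \<and> ?P a w)"
      using tr by blast
  next
    assume "?P u w \<or> (?P u a \<and> ?P b w) \<or> (?P u b \<and> ?P a w)"
    then show "(u,w) \<in> (edge_rel es (insert e s))\<^sup>*"
      unfolding eq by blast
  qed
  then show ?thesis
    unfolding comp_rel_def using aV bV by auto
qed

end


context gr
begin

definition bad :: "nat set \<Rightarrow> 'v set set \<Rightarrow> nat set \<Rightarrow> bool" where
  "bad s X s' \<longleftrightarrow> (\<exists>u\<in>V. \<exists>w\<in>V. cmp s u \<in> X \<and> cmp s w \<in> X \<and> cmp s u \<noteq> cmp s w \<and> cmp s' u = cmp s' w)"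

definition lift :: "nat set \<Rightarrow> 'v set set \<Rightarrow> nat set \<Rightarrow> 'v set set" where
  "lift s X s' = {cmp s' v | v. v \<in> V \<and> cmp s v \<in> X}"

lemma lift_memI: "v \<in> V \<Longrightarrow> cmp s v \<in> X \<Longrightarrow> cmp s' v \<in> lift s X s'"
  unfolding lift_def by (intro CollectI exI[of _ v]) simp

lemma lift_memE: "C \<in> lift s X s' \<Longrightarrow> \<exists>v. v \<in> V \<and> cmp s v \<in> X \<and> C = cmp s' v"
  unfolding lift_def by blast

lemma rel_cmp: "u \<in> V \<Longrightarrow> w \<in> V \<Longrightarrow> (u,w) \<in> rel s \<longleftrightarrow> cmp s u = cmp s w"
  using cmp_eq_iff by simp

lemma cmp_insert:
  assumes e: "e < length es" and a: "a = fst (es!e)" and b: "b = snd (es!e)" and v: "v \<in> V"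
  shows "cmp (insert e s) v = (if cmp s v = cmp s a \<or> cmp s v = cmp s b then cmp s a \<union> cmp s b else cmp s v)"
proof -
  have aV: "a \<in> V" and bV: "b \<in> V" using esV e a b nth_mem by fastforce+
  have mem: "\<And>w. w \<in> cmp (insert e s) v \<longleftrightarrow> w \<in> cmp s v \<or> (cmp s v = cmp s a \<and> w \<in> cmp s b) \<or> (cmp s v = cmp s b \<and> w \<in> cmp s a)"
  proof -
    fix w
    have "w \<in> cmp (insert e s) v \<longleftrightarrow> (v,w) \<in> rel s \<or> ((v,a) \<in> rel s \<and> (b,w) \<in> rel s) \<or> ((v,b) \<in> rel s \<and> (a,w) \<in> rel s)"
      unfolding mem_cmp using rel_insert[OF e a b] by simp
    also have "\<dots> \<longleftrightarrow> w \<in> cmp s v \<or> (cmp s v = cmp s a \<and> w \<in> cmp s b) \<or> (cmp s v = cmp s b \<and> w \<in> cmp s a)"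
      using rel_cmp[OF v aV] rel_cmp[OF v bV] mem_cmp by blast
    finally show "?thesis w" .
  qed
  show ?thesis
  proof (cases "cmp s v = cmp s a")
    case True
    show ?thesis
    proof (rule set_eqI)
      fix w
      have "w \<in> cmp (insert e s) v \<longleftrightarrow> w \<in> cmp s a \<or> w \<in> cmp s b \<or> (cmp s a = cmp s b \<and> w \<in> cmp s a)"
        using mem[of w] True by simp
      then show "w \<in> cmp (insert e s) v \<longleftrightarrow> w \<in> (if cmp s v = cmp s a \<or> cmp s v = cmp s b then cmp s a \<union> cmp s b else cmp s v)"
        using True by auto
    qed
  next
    case f1: False
    show ?thesis
    proof (cases "cmp s v = cmp s b")
      case True
      show ?thesis
      proof (rule set_eqI)
        fix w
        have "w \<in> cmp (insert e s) v \<longleftrightarrow> w \<in> cmp s b \<or> w \<in> cmp s a"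
          using mem[of w] True f1 by simp
        then show "w \<in> cmp (insert e s) v \<longleftrightarrow> w \<in> (if cmp s v = cmp s a \<or> cmp s v = cmp s b then cmp s a \<union> cmp s b else cmp s v)"
          using True by auto
      qed
    next
      case False
      show ?thesis
      proof (rule set_eqI)
        fix w
        show "w \<in> cmp (insert e s) v \<longleftrightarrow> w \<in> (if cmp s v = cmp s a \<or> cmp s v = cmp s b then cmp s a \<union> cmp s b else cmp s v)"
          using mem[of w] False f1 by simp
      qed
    qed
  qed
qed

lemma G_lemma:
  assumes "w \<in> V" "a \<in> V" "b \<in> V" "cmp s w = cmp s a \<union> cmp s b"
  shows "cmp s a = cmp s b"
proof -
  have "a \<in> cmp s w" "b \<in> cmp s w" using assms(2,3,4) self_cmp[of a s] self_cmp[of b s] by auto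
  then have "cmp s a = cmp s w" "cmp s b = cmp s w" using in_cmp_eq[OF assms(1)] by blast+
  then show ?thesis by simp
qed

lemma comps_cmp: "C \<in> comps V es s \<Longrightarrow> \<exists>v\<in>V. C = cmp s v"
  unfolding comps_eq by auto

lemma lift_same:
  assumes "X \<subseteq> comps V es s" "\<forall>v\<in>V. cmp s' v = cmp s v"
  shows "lift s X s' = X"
proof
  show "lift s X s' \<subseteq> X"
  proof
    fix C assume "C \<in> lift s X s'"
    then obtain v where v: "v \<in> V" "cmp s v \<in> X" "C = cmp s' v" using lift_memE by blast
    have "cmp s' v = cmp s v" using assms(2) v(1) by (rule bspec)
    with v(3) have "C = cmp s v" by (rule trans)
    then show "C \<in> X" using v(2) by simp
  qed
  show "X \<subseteq> lift s X s'"
  proof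
    fix C assume C: "C \<in> X"
    then obtain v where v: "v \<in> V" "C = cmp s v" using assms(1) comps_cmp by blast
    have "cmp s' v = cmp s v" using assms(2) v(1) by (rule bspec)
    then have "C = cmp s' v" using v(2) by (rule ssubst)
    moreover have "cmp s' v \<in> lift s X s'" using v C by (intro lift_memI) simp_all
    ultimately show "C \<in> lift s X s'" by simp
  qed
qed

lemma state_e_char:
  assumes X: "X \<subseteq> comps V es s" and e: "e < length es"
  shows "state_e V es (s,X) e = (if bad s X (insert e s) then None else Some (insert e s, lift s X (insert e s)))"
proof -
  define a where "a = fst (es!e)"
  define b where "b = snd (es!e)"
  have aV: "a \<in> V" and bV: "b \<in> V" using es_V[OF e] a_def b_def by simp_all
  define C1 where "C1 = cmp s a"
  define C2 where "C2 = cmp s b"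
  let ?s' = "insert e s"
  have F: "\<And>v. v \<in> V \<Longrightarrow> cmp ?s' v = (if cmp s v = C1 \<or> cmp s v = C2 then C1 \<union> C2 else cmp s v)"
    unfolding C1_def C2_def using cmp_insert[OF e a_def b_def] by simp
  have Xc: "\<And>C. C \<in> X \<Longrightarrow> \<exists>v\<in>V. C = cmp s v" using X comps_cmp by blast
  have st: "state_e V es (s,X) e = (if C1 = C2 then Some (?s', X)
         else if C1 \<in> X \<and> C2 \<in> X then None
         else if C1 \<in> X \<or> C2 \<in> X then Some (?s', insert (C1 \<union> C2) (X - {C1, C2}))
         else Some (?s', X - {C1, C2}))"
    unfolding state_e_def C1_def C2_def a_def b_def Let_def by simp
  have a1: "cmp s a = C1" and b2: "cmp s b = C2" unfolding C1_def C2_def by simp_all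
  show ?thesis
  proof (cases "C1 = C2")
    case True
    have same: "\<forall>v\<in>V. cmp ?s' v = cmp s v"
    proof
      fix v assume v: "v \<in> V"
      show "cmp ?s' v = cmp s v"
      proof (cases "cmp s v = C1 \<or> cmp s v = C2")
        case True
        then show ?thesis using F[OF v] \<open>C1 = C2\<close> by auto
      next
        case False
        then show ?thesis using F[OF v] by simp
      qed
    qed
    have "\<not> bad s X ?s'"
    proof
      assume "bad s X ?s'"
      then obtain u w where "u \<in> V" "w \<in> V" "cmp s u \<noteq> cmp s w" "cmp ?s' u = cmp ?s' w"
        unfolding bad_def by blast
      then show False using same by simp
    qed
    moreover have "lift s X ?s' = X" using lift_same[OF X same] .
    ultimately show ?thesis using st True by simp
  next
    case ne: False
    have nG: "\<And>w. w \<in> V \<Longrightarrow> cmp s w \<noteq> C1 \<union> C2"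
    proof
      fix w assume w: "w \<in> V" "cmp s w = C1 \<union> C2"
      then have "cmp s w = cmp s a \<union> cmp s b" using a1 b2 by simp
      then have "cmp s a = cmp s b" using G_lemma[OF w(1) aV bV] by simp
      then show False using ne a1 b2 by simp
    qed
    show ?thesis
    proof (cases "C1 \<in> X \<and> C2 \<in> X")
      case True
      have "cmp ?s' a = C1 \<union> C2" using F[OF aV] a1 by simp
      moreover have "cmp ?s' b = C1 \<union> C2" using F[OF bV] b2 by simp
      ultimately have "cmp ?s' a = cmp ?s' b" by simp
      then have "bad s X ?s'" unfolding bad_def using aV bV a1 b2 True ne by blast
      then show ?thesis using st ne True by simp
    next
      case nb: False
      have notbad: "\<not> bad s X ?s'"
      proof
        assume "bad s X ?s'"
        then obtain u w where u: "u \<in> V" and w: "w \<in> V" and uX: "cmp s u \<in> X" and wX: "cmp s w \<in> X"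
          and neq: "cmp s u \<noteq> cmp s w" and eq: "cmp ?s' u = cmp ?s' w"
          unfolding bad_def by blast
        show False
        proof (cases "cmp s u = C1 \<or> cmp s u = C2")
          case cu: True
          show False
          proof (cases "cmp s w = C1 \<or> cmp s w = C2")
            case True
            then show False using cu neq uX wX nb by auto
          next
            case False
            have "cmp ?s' u = C1 \<union> C2" using F[OF u] cu by simp
            moreover have "cmp ?s' w = cmp s w" using F[OF w] False by simp
            ultimately show False using eq nG[OF w] by simp
          qed
        next
          case cu: False
          have eu: "cmp ?s' u = cmp s u" using F[OF u] cu by simp
          show False
          proof (cases "cmp s w = C1 \<or> cmp s w = C2")
            case True
            have "cmp ?s' w = C1 \<union> C2" using F[OF w] True by simp
            then show False using eq eu nG[OF u] by simp
          next
            case False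
            have "cmp ?s' w = cmp s w" using F[OF w] False by simp
            then show False using eq eu neq by simp
          qed
        qed
      qed
      show ?thesis
      proof (cases "C1 \<in> X \<or> C2 \<in> X")
        case True
        have "lift s X ?s' = insert (C1 \<union> C2) (X - {C1, C2})"
        proof
          show "lift s X ?s' \<subseteq> insert (C1 \<union> C2) (X - {C1, C2})"
          proof
            fix C assume "C \<in> lift s X ?s'"
            then obtain v where v: "v \<in> V" "cmp s v \<in> X" "C = cmp ?s' v" using lift_memE by blast
            show "C \<in> insert (C1 \<union> C2) (X - {C1, C2})"
            proof (cases "cmp s v = C1 \<or> cmp s v = C2")
              case True
              then have "C = C1 \<union> C2" using F[OF v(1)] v(3) by simp
              then show ?thesis by simp
            next
              case False
              then have "C = cmp s v" using F[OF v(1)] v(3) by simp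
              then show ?thesis using False v(2) by simp
            qed
          qed
          show "insert (C1 \<union> C2) (X - {C1, C2}) \<subseteq> lift s X ?s'"
          proof
            fix C assume "C \<in> insert (C1 \<union> C2) (X - {C1, C2})"
            then consider "C = C1 \<union> C2" | "C \<in> X" "C \<noteq> C1" "C \<noteq> C2" by blast
            then show "C \<in> lift s X ?s'"
            proof cases
              case 1
              show ?thesis
              proof (cases "C1 \<in> X")
                case True
                have "C = cmp ?s' a" using 1 F[OF aV] a1 by simp
                moreover have "cmp ?s' a \<in> lift s X ?s'" using aV True a1 by (intro lift_memI) simp_all
                ultimately show ?thesis by simp
              next
                case False
                then have c2: "C2 \<in> X" using \<open>C1 \<in> X \<or> C2 \<in> X\<close> by simp
                have "C = cmp ?s' b" using 1 F[OF bV] b2 by simp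
                moreover have "cmp ?s' b \<in> lift s X ?s'" using bV c2 b2 by (intro lift_memI) simp_all
                ultimately show ?thesis by simp
              qed
            next
              case 2
              then obtain v where v: "v \<in> V" "C = cmp s v" using Xc by blast
              then have "C = cmp ?s' v" using 2 F[OF v(1)] by simp
              moreover have "cmp ?s' v \<in> lift s X ?s'" using v 2 by (intro lift_memI) simp_all
              ultimately show ?thesis by simp
            qed
          qed
        qed
        then show ?thesis using st ne nb True notbad by simp
      next
        case False
        have same: "\<And>v. v \<in> V \<Longrightarrow> cmp s v \<in> X \<Longrightarrow> cmp ?s' v = cmp s v"
        proof -
          fix v assume v: "v \<in> V" "cmp s v \<in> X"
          then have "\<not> (cmp s v = C1 \<or> cmp s v = C2)" using False by auto
          then show "cmp ?s' v = cmp s v" using F[OF v(1)] by simp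
        qed
        have "lift s X ?s' = X"
        proof
          show "lift s X ?s' \<subseteq> X"
          proof
            fix C assume "C \<in> lift s X ?s'"
            then obtain v where v: "v \<in> V" "cmp s v \<in> X" "C = cmp ?s' v" using lift_memE by blast
            then have "C = cmp s v" using same by simp
            then show "C \<in> X" using v(2) by simp
          qed
          show "X \<subseteq> lift s X ?s'"
          proof
            fix C assume C: "C \<in> X"
            then obtain v where v: "v \<in> V" "C = cmp s v" using Xc by blast
            then have vX: "cmp s v \<in> X" using C by simp
            then have "C = cmp ?s' v" using same[OF v(1) vX] v(2) by simp
            moreover have "cmp ?s' v \<in> lift s X ?s'" using v vX by (intro lift_memI) simp_all
            ultimately show "C \<in> lift s X ?s'" by simp
          qed
        qed
        moreover have "X - {C1, C2} = X" using False by auto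
        ultimately show ?thesis using st ne nb False notbad by simp
      qed
    qed
  qed
qed

end


context gr
begin

lemma bad_trans:
  assumes "s \<subseteq> s1" "s1 \<subseteq> s2"
  shows "bad s X s2 \<longleftrightarrow> bad s X s1 \<or> bad s1 (lift s X s1) s2"
proof
  assume "bad s X s2"
  then obtain u w where u: "u \<in> V" and w: "w \<in> V" and uX: "cmp s u \<in> X" and wX: "cmp s w \<in> X"
    and neq: "cmp s u \<noteq> cmp s w" and eq: "cmp s2 u = cmp s2 w"
    unfolding bad_def by blast
  show "bad s X s1 \<or> bad s1 (lift s X s1) s2"
  proof (cases "cmp s1 u = cmp s1 w")
    case True
    then have "bad s X s1" unfolding bad_def using u w uX wX neq by blast
    then show ?thesis by simp
  next
    case False
    have "cmp s1 u \<in> lift s X s1" using u uX by (rule lift_memI)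
    moreover have "cmp s1 w \<in> lift s X s1" using w wX by (rule lift_memI)
    ultimately have "bad s1 (lift s X s1) s2" unfolding bad_def using u w False eq by blast
    then show ?thesis by simp
  qed
next
  assume "bad s X s1 \<or> bad s1 (lift s X s1) s2"
  then show "bad s X s2"
  proof
    assume "bad s X s1"
    then obtain u w where u: "u \<in> V" and w: "w \<in> V" and uX: "cmp s u \<in> X" and wX: "cmp s w \<in> X"
      and neq: "cmp s u \<noteq> cmp s w" and eq: "cmp s1 u = cmp s1 w"
      unfolding bad_def by blast
    have "cmp s2 u = cmp s2 w" using cmp_mono[OF assms(2) u w eq] .
    then show "bad s X s2" unfolding bad_def using u w uX wX neq by blast
  next
    assume "bad s1 (lift s X s1) s2"
    then obtain u w where u: "u \<in> V" and w: "w \<in> V" and uX: "cmp s1 u \<in> lift s X s1"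
      and wX: "cmp s1 w \<in> lift s X s1"
      and neq: "cmp s1 u \<noteq> cmp s1 w" and eq: "cmp s2 u = cmp s2 w"
      unfolding bad_def by blast
    obtain u' where u': "u' \<in> V" "cmp s u' \<in> X" "cmp s1 u = cmp s1 u'" using lift_memE[OF uX] by blast
    obtain w' where w': "w' \<in> V" "cmp s w' \<in> X" "cmp s1 w = cmp s1 w'" using lift_memE[OF wX] by blast
    have "cmp s2 u = cmp s2 u'" using cmp_mono[OF assms(2) u u'(1) u'(3)] .
    moreover have "cmp s2 w = cmp s2 w'" using cmp_mono[OF assms(2) w w'(1) w'(3)] .
    ultimately have eq': "cmp s2 u' = cmp s2 w'" using eq by simp
    have "cmp s u' \<noteq> cmp s w'"
    proof
      assume "cmp s u' = cmp s w'"
      then have "cmp s1 u' = cmp s1 w'" using cmp_mono[OF assms(1) u'(1) w'(1)] by simp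
      then show False using neq u'(3) w'(3) by simp
    qed
    then show "bad s X s2" unfolding bad_def using u'(1,2) w'(1,2) eq' by blast
  qed
qed

lemma lift_trans:
  assumes "s \<subseteq> s1" "s1 \<subseteq> s2"
  shows "lift s1 (lift s X s1) s2 = lift s X s2"
proof
  show "lift s1 (lift s X s1) s2 \<subseteq> lift s X s2"
  proof
    fix C assume "C \<in> lift s1 (lift s X s1) s2"
    then obtain v where v: "v \<in> V" "cmp s1 v \<in> lift s X s1" "C = cmp s2 v" using lift_memE by blast
    obtain v' where v': "v' \<in> V" "cmp s v' \<in> X" "cmp s1 v = cmp s1 v'" using lift_memE[OF v(2)] by blast
    have "cmp s2 v = cmp s2 v'" using cmp_mono[OF assms(2) v(1) v'(1) v'(3)] .
    moreover have "cmp s2 v' \<in> lift s X s2" using v'(1,2) by (rule lift_memI)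
    ultimately show "C \<in> lift s X s2" using v(3) by simp
  qed
  show "lift s X s2 \<subseteq> lift s1 (lift s X s1) s2"
  proof
    fix C assume "C \<in> lift s X s2"
    then obtain v where v: "v \<in> V" "cmp s v \<in> X" "C = cmp s2 v" using lift_memE by blast
    have "cmp s1 v \<in> lift s X s1" using v(1,2) by (rule lift_memI)
    then have "cmp s2 v \<in> lift s1 (lift s X s1) s2" by (rule lift_memI[OF v(1)])
    then show "C \<in> lift s1 (lift s X s1) s2" using v(3) by simp
  qed
qed

lemma lift_sub: "lift s X s' \<subseteq> comps V es s'"
proof
  fix C assume "C \<in> lift s X s'"
  then obtain v where v: "v \<in> V" "C = cmp s' v" using lift_memE by blast
  then show "C \<in> comps V es s'" unfolding comps_eq by simp
qed

lemma card_lift: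
  assumes ss: "s \<subseteq> s'" and nb: "\<not> bad s X s'" and X: "X \<subseteq> comps V es s"
  shows "card (lift s X s') = card X"
proof -
  define r where "r C = (SOME v. v \<in> V \<and> C = cmp s v)" for C
  have r: "r C \<in> V \<and> C = cmp s (r C)" if "C \<in> X" for C
  proof -
    have "\<exists>v. v \<in> V \<and> C = cmp s v" using that X comps_cmp by blast
    then show ?thesis unfolding r_def by (rule someI_ex)
  qed
  define \<phi> where "\<phi> C = cmp s' (r C)" for C
  have img: "lift s X s' = \<phi> ` X"
  proof
    show "lift s X s' \<subseteq> \<phi> ` X"
    proof
      fix D assume "D \<in> lift s X s'"
      then obtain v where v: "v \<in> V" "cmp s v \<in> X" "D = cmp s' v" using lift_memE by blast
      have rv: "r (cmp s v) \<in> V" "cmp s v = cmp s (r (cmp s v))" using r[OF v(2)] by auto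
      have "cmp s' v = cmp s' (r (cmp s v))" using cmp_mono[OF ss v(1) rv(1) rv(2)] .
      then have "D = \<phi> (cmp s v)" using v(3) unfolding \<phi>_def by simp
      then show "D \<in> \<phi> ` X" using v(2) by simp
    qed
    show "\<phi> ` X \<subseteq> lift s X s'"
    proof
      fix D assume "D \<in> \<phi> ` X"
      then obtain C where C: "C \<in> X" "D = \<phi> C" by blast
      have "r C \<in> V" "cmp s (r C) \<in> X" using r[OF C(1)] C(1) by auto
      then have "cmp s' (r C) \<in> lift s X s'" by (rule lift_memI)
      then show "D \<in> lift s X s'" using C(2) unfolding \<phi>_def by simp
    qed
  qed
  have "inj_on \<phi> X"
  proof (rule inj_onI)
    fix C D assume C: "C \<in> X" and D: "D \<in> X" and eq: "\<phi> C = \<phi> D"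
    show "C = D"
    proof (rule ccontr)
      assume ne: "C \<noteq> D"
      have rC: "r C \<in> V" "C = cmp s (r C)" using r[OF C] by auto
      have rD: "r D \<in> V" "D = cmp s (r D)" using r[OF D] by auto
      have "bad s X s'" unfolding bad_def
        using rC rD C D ne eq unfolding \<phi>_def by metis
      then show False using nb by simp
    qed
  qed
  then show ?thesis unfolding img by (rule card_image)
qed

definition comp2 :: "'v state \<Rightarrow> nat \<Rightarrow> nat \<Rightarrow> 'v state option" where
  "comp2 S e f = (case state_e V es S e of None \<Rightarrow> None | Some T \<Rightarrow> state_e V es T f)"

lemma comp2_char:
  assumes X: "X \<subseteq> comps V es s" and e: "e < length es" and f: "f < length es"
  shows "comp2 (s,X) e f = (if bad s X (insert f (insert e s)) then None
            else Some (insert f (insert e s), lift s X (insert f (insert e s))))"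
proof -
  let ?s1 = "insert e s" and ?s2 = "insert f (insert e s)"
  have ss: "s \<subseteq> ?s1" "?s1 \<subseteq> ?s2" by auto
  show ?thesis
  proof (cases "bad s X ?s1")
    case True
    then have "bad s X ?s2" using bad_trans[OF ss] by simp
    then show ?thesis unfolding comp2_def using state_e_char[OF X e] True by simp
  next
    case False
    have L: "lift s X ?s1 \<subseteq> comps V es ?s1" by (rule lift_sub)
    have "comp2 (s,X) e f = state_e V es (?s1, lift s X ?s1) f"
      unfolding comp2_def using state_e_char[OF X e] False by simp
    also have "\<dots> = (if bad ?s1 (lift s X ?s1) ?s2 then None else Some (?s2, lift ?s1 (lift s X ?s1) ?s2))"
      using state_e_char[OF L f] .
    also have "\<dots> = (if bad s X ?s2 then None else Some (?s2, lift s X ?s2))"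
      using bad_trans[OF ss] lift_trans[OF ss] False by simp
    finally show ?thesis .
  qed
qed

lemma comp2_sym:
  assumes X: "X \<subseteq> comps V es s" and e: "e < length es" and f: "f < length es"
  shows "comp2 (s,X) e f = comp2 (s,X) f e"
  unfolding comp2_char[OF X e f] comp2_char[OF X f e] insert_commute[of f e] ..

lemma state_e_valid:
  assumes S: "(s,X) \<in> states V es i j" and e: "e < length es" "e \<notin> s"
    and T: "state_e V es (s,X) e = Some T"
  shows "T \<in> states V es (Suc i) j" "fst T = insert e s"
proof -
  have s: "s \<subseteq> {..<length es}" and X: "X \<subseteq> comps V es s" and ci: "card s = i" and cj: "card X = j"
    using S unfolding states_def by auto
  have nb: "\<not> bad s X (insert e s)" and T': "T = (insert e s, lift s X (insert e s))"
    using T state_e_char[OF X e(1)] by (auto split: if_splits)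
  have fs: "finite s" using s finite_subset by blast
  have "card (lift s X (insert e s)) = j" using card_lift[OF _ nb X] cj by auto
  moreover have "card (insert e s) = Suc i" using fs e(2) ci by simp
  moreover have "insert e s \<subseteq> {..<length es}" using s e(1) by simp
  ultimately show "T \<in> states V es (Suc i) j" unfolding T' states_def using lift_sub by blast
  show "fst T = insert e s" using T' by simp
qed

lemma allstates: "{S. S \<in> (\<Union>i j. states V es i j)} = {(s,X). s \<subseteq> {..<length es} \<and> X \<subseteq> comps V es s}"
  unfolding states_def by auto

lemma finite_allstates: "finite {(s,X). s \<subseteq> {..<length es} \<and> X \<subseteq> comps V es s}"
proof -
  have "{(s,X). s \<subseteq> {..<length es} \<and> X \<subseteq> comps V es s} \<subseteq> Pow {..<length es} \<times> Pow (Pow V)"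
  proof
    fix p assume p: "p \<in> {(s,X). s \<subseteq> {..<length es} \<and> X \<subseteq> comps V es s}"
    obtain s X where p': "p = (s,X)" by (cases p)
    have "comps V es s \<subseteq> Pow V" unfolding comps_eq using cmp_sub by blast
    moreover have "X \<subseteq> comps V es s" "s \<subseteq> {..<length es}" using p p' by auto
    ultimately show "p \<in> Pow {..<length es} \<times> Pow (Pow V)" unfolding p' by blast
  qed
  moreover have "finite (Pow {..<length es} \<times> Pow (Pow V))" using finV by simp
  ultimately show ?thesis by (rule finite_subset)
qed

end


definition diffR :: "'v set \<Rightarrow> ('v \<times> 'v) list \<Rightarrow> ('v state \<Rightarrow> 'r::comm_ring_1) \<Rightarrow> ('v state \<Rightarrow> 'r)" where
  "diffR V es f = (\<lambda>T. \<Sum>S\<in>{S. S \<in> (\<Union>i j. states V es i j)}.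
       \<Sum>e\<in>{e. e < length es \<and> e \<notin> fst S}.
          (if state_e V es S e = Some T then f S * (-1) ^ nbefore (fst S) e else 0))"

lemma diff_diffR: "diff V es = diffR V es"
  unfolding diff_def diffR_def by (rule ext) simp

lemma antisym_sum_zero:
  fixes h :: "nat \<Rightarrow> nat \<Rightarrow> 'r::linordered_idom"
  assumes A: "finite A" and h: "\<And>e f. e \<in> A \<Longrightarrow> f \<in> A \<Longrightarrow> e \<noteq> f \<Longrightarrow> h f e = - h e f"
  shows "(\<Sum>e\<in>A. \<Sum>f\<in>A - {e}. h e f) = 0"
proof -
  let ?P = "Sigma A (\<lambda>e. A - {e})"
  have fP: "finite ?P" using A by auto
  have "(\<Sum>e\<in>A. \<Sum>f\<in>A - {e}. h e f) = (\<Sum>(e,f)\<in>?P. h e f)"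
    using A by (intro sum.Sigma) auto
  also have "\<dots> = (\<Sum>p\<in>?P. h (fst p) (snd p))" by (simp add: case_prod_beta')
  finally have 1: "(\<Sum>e\<in>A. \<Sum>f\<in>A - {e}. h e f) = (\<Sum>p\<in>?P. h (fst p) (snd p))" .
  have bij: "bij_betw prod.swap ?P ?P"
    by (rule bij_betw_byWitness[where f' = prod.swap]) auto
  have "(\<Sum>p\<in>?P. h (fst p) (snd p)) = (\<Sum>p\<in>?P. h (fst (prod.swap p)) (snd (prod.swap p)))"
    using sum.reindex_bij_betw[OF bij, of "\<lambda>p. h (fst p) (snd p)"] by simp
  also have "\<dots> = (\<Sum>p\<in>?P. - h (fst p) (snd p))"
    by (rule sum.cong) (auto intro: h)
  also have "\<dots> = - (\<Sum>p\<in>?P. h (fst p) (snd p))" by (simp add: sum_negf)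
  finally have "(\<Sum>p\<in>?P. h (fst p) (snd p)) = 0" by simp
  then show ?thesis using 1 by simp
qed

lemma nbefore_insert:
  assumes "finite s" "e \<notin> s"
  shows "nbefore (insert e s) f = nbefore s f + (if e < f then 1 else 0)"
proof (cases "e < f")
  case True
  have "{k \<in> insert e s. k < f} = insert e {k \<in> s. k < f}" using True by auto
  then show ?thesis unfolding nbefore_def using assms True by simp
next
  case False
  have "{k \<in> insert e s. k < f} = {k \<in> s. k < f}" using False by auto
  then show ?thesis unfolding nbefore_def using False by simp
qed

context gr
begin

abbreviation "AS \<equiv> {(s,X). s \<subseteq> {..<length es} \<and> X \<subseteq> comps V es s}"
abbreviation "EE S \<equiv> {e. e < length es \<and> e \<notin> fst S}"

lemma diffR_AS: "diffR V es f T = (\<Sum>S\<in>AS. \<Sum>e\<in>EE S.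
          (if state_e V es S e = Some T then f S * (-1) ^ nbefore (fst S) e else 0))"
  unfolding diffR_def allstates by simp

lemma valid_AS:
  assumes S: "S \<in> AS" and e: "e \<in> EE S" and T: "state_e V es S e = Some T"
  shows "T \<in> AS" "fst T = insert e (fst S)"
proof -
  obtain s X where S': "S = (s,X)" by (cases S)
  have "(s,X) \<in> states V es (card s) (card X)" using S S' unfolding states_def by auto
  then have "T \<in> states V es (Suc (card s)) (card X)" "fst T = insert e s"
    using state_e_valid[of s X _ _ e T] e T S' by auto
  then show "T \<in> AS" "fst T = insert e (fst S)" unfolding states_def using S' by auto
qed

lemma collapse:
  assumes S: "S \<in> AS" and e: "e \<in> EE S"
  shows "(\<Sum>T\<in>AS. (if state_e V es S e = Some T then F T else 0)) =
         (case state_e V es S e of None \<Rightarrow> 0 | Some T0 \<Rightarrow> F T0)"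
proof (cases "state_e V es S e")
  case None
  then show ?thesis by simp
next
  case (Some T0)
  then have "T0 \<in> AS" using valid_AS[OF S e] by simp
  moreover have "(\<Sum>T\<in>AS. (if Some T0 = Some T then F T else 0)) = (\<Sum>T\<in>AS. (if T0 = T then F T else 0))"
    by simp
  ultimately show ?thesis using Some finite_allstates by (simp add: sum.delta)
qed

lemma per_state_zero:
  fixes U :: "'v state"
  assumes S: "S \<in> AS"
  defines "c \<equiv> (\<lambda>T. \<Sum>e'\<in>EE T. (if state_e V es T e' = Some U then ((-1::'r::linordered_idom) ^ nbefore (fst T) e') else 0))"
  shows "(\<Sum>e\<in>EE S. (-1) ^ nbefore (fst S) e * (case state_e V es S e of None \<Rightarrow> 0 | Some T0 \<Rightarrow> c T0)) = 0"
proof -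
  obtain s X where S': "S = (s,X)" by (cases S)
  have X: "X \<subseteq> comps V es s" and s: "s \<subseteq> {..<length es}" using S S' by auto
  have fs: "finite s" using s finite_subset by blast
  define h where "h e e' = (if comp2 S e e' = Some U then (-1::'r) ^ nbefore s e * (-1) ^ nbefore (insert e s) e' else 0)" for e e'
  have trm: "(-1) ^ nbefore (fst S) e * (case state_e V es S e of None \<Rightarrow> 0 | Some T0 \<Rightarrow> c T0)
      = (\<Sum>e'\<in>EE S - {e}. h e e')" if e: "e \<in> EE S" for e
  proof (cases "state_e V es S e")
    case None
    then have "comp2 S e e' = None" for e' unfolding comp2_def by simp
    then show ?thesis using None unfolding h_def by simp
  next
    case (Some T0)
    have fT0: "fst T0 = insert e s" using valid_AS(2)[OF S e Some] S' by simp
    have E: "EE T0 = EE S - {e}" using fT0 S' by auto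
    have "c T0 = (\<Sum>e'\<in>EE T0. if state_e V es T0 e' = Some U then (-1::'r) ^ nbefore (fst T0) e' else 0)"
      by (simp add: c_def)
    also have "\<dots> = (\<Sum>e'\<in>EE S - {e}. (if comp2 S e e' = Some U then (-1::'r) ^ nbefore (insert e s) e' else 0))"
      unfolding E by (rule sum.cong[OF refl]) (simp add: comp2_def Some fT0)
    finally have "c T0 = (\<Sum>e'\<in>EE S - {e}. (if comp2 S e e' = Some U then (-1::'r) ^ nbefore (insert e s) e' else 0))" .
    then show ?thesis using Some S' unfolding h_def by (simp add: sum_distrib_left if_distrib cong: if_cong)
  qed
  have "(\<Sum>e\<in>EE S. (-1) ^ nbefore (fst S) e * (case state_e V es S e of None \<Rightarrow> 0 | Some T0 \<Rightarrow> c T0))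
      = (\<Sum>e\<in>EE S. \<Sum>e'\<in>EE S - {e}. h e e')"
    by (rule sum.cong) (simp_all add: trm)
  also have "\<dots> = 0"
  proof (rule antisym_sum_zero)
    show "finite (EE S)" by simp
    fix e e' assume e: "e \<in> EE S" and e': "e' \<in> EE S" and ne: "e \<noteq> e'"
    have c2: "comp2 S e' e = comp2 S e e'" unfolding S' using comp2_sym[OF X] e e' by simp
    have es: "e \<notin> s" "e' \<notin> s" using e e' S' by auto
    have n1: "nbefore (insert e s) e' = nbefore s e' + (if e < e' then 1 else 0)" using nbefore_insert[OF fs es(1)] .
    have n2: "nbefore (insert e' s) e = nbefore s e + (if e' < e then 1 else 0)" using nbefore_insert[OF fs es(2)] .
    have "(-1::'r) ^ nbefore s e' * (-1) ^ nbefore (insert e' s) e = - ((-1) ^ nbefore s e * (-1) ^ nbefore (insert e s) e')"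
    proof (cases "e < e'")
      case True
      then have "\<not> e' < e" by simp
      then show ?thesis unfolding n1 n2 using True by (simp add: power_add)
    next
      case False
      then have "e' < e" using ne by simp
      then show ?thesis unfolding n1 n2 using False by (simp add: power_add)
    qed
    then show "h e' e = - h e e'" unfolding h_def c2 by simp
  qed
  finally show ?thesis .
qed

lemma diffR_diffR:
  fixes f :: "'v state \<Rightarrow> 'r::linordered_idom"
  shows "diffR V es (diffR V es f) = (\<lambda>_. 0)"
proof
  fix U
  define c where "c = (\<lambda>T. \<Sum>e'\<in>EE T. (if state_e V es T e' = Some U then ((-1::'r) ^ nbefore (fst T) e') else 0))"
  have fAS: "finite AS" by (rule finite_allstates)
  have "diffR V es (diffR V es f) U = (\<Sum>T\<in>AS. c T * diffR V es f T)"
    unfolding diffR_AS[of "diffR V es f"] c_def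
  proof (rule sum.cong[OF refl])
    fix T
    have "\<And>cc a b. (if cc then a * b else 0) = a * (if cc then b else (0::'r))" by simp
    then show "(\<Sum>e\<in>EE T. if state_e V es T e = Some U then diffR V es f T * (-1) ^ nbefore (fst T) e else 0)
      = (\<Sum>e'\<in>EE T. if state_e V es T e' = Some U then (-1) ^ nbefore (fst T) e' else 0) * diffR V es f T"
      by (simp add: sum_distrib_left mult.commute)
  qed
  also have "\<dots> = (\<Sum>T\<in>AS. \<Sum>S\<in>AS. \<Sum>e\<in>EE S. (if state_e V es S e = Some T then c T * (f S * (-1) ^ nbefore (fst S) e) else 0))"
    unfolding diffR_AS[of f] by (simp add: sum_distrib_left if_distrib cong: if_cong)
  also have "\<dots> = (\<Sum>S\<in>AS. \<Sum>T\<in>AS. \<Sum>e\<in>EE S. (if state_e V es S e = Some T then c T * (f S * (-1) ^ nbefore (fst S) e) else 0))"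
    by (rule sum.swap)
  also have "\<dots> = (\<Sum>S\<in>AS. \<Sum>e\<in>EE S. \<Sum>T\<in>AS. (if state_e V es S e = Some T then c T * (f S * (-1) ^ nbefore (fst S) e) else 0))"
    by (rule sum.cong[OF refl], rule sum.swap)
  also have "\<dots> = (\<Sum>S\<in>AS. \<Sum>e\<in>EE S. (case state_e V es S e of None \<Rightarrow> 0 | Some T0 \<Rightarrow> c T0 * (f S * (-1) ^ nbefore (fst S) e)))"
    by (rule sum.cong[OF refl], rule sum.cong[OF refl], rule collapse) auto
  also have "\<dots> = (\<Sum>S\<in>AS. f S * (\<Sum>e\<in>EE S. (-1) ^ nbefore (fst S) e * (case state_e V es S e of None \<Rightarrow> 0 | Some T0 \<Rightarrow> c T0)))"
    by (rule sum.cong[OF refl], simp only: sum_distrib_left, rule sum.cong[OF refl], simp add: mult_ac split: option.split)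
  also have "\<dots> = 0"
  proof (rule sum.neutral, rule ballI)
    fix S assume S: "S \<in> AS"
    show "f S * (\<Sum>e\<in>EE S. (-1) ^ nbefore (fst S) e * (case state_e V es S e of None \<Rightarrow> 0 | Some T0 \<Rightarrow> c T0)) = 0"
      unfolding c_def using per_state_zero[OF S, of U, where 'r = 'r] by simp
  qed
  finally show "diffR V es (diffR V es f) U = 0" .
qed

end


definition qs :: "rat \<Rightarrow> ('a \<Rightarrow> rat) \<Rightarrow> 'a \<Rightarrow> rat" where
  "qs c f = (\<lambda>x. c * f x)"

lemma qs_apply [simp]: "qs c f x = c * f x"
  by (simp add: qs_def)

lemma vs_qs: "vector_space qs"
  by unfold_locales (auto simp: qs_def algebra_simps)

global_interpretation Q: vector_space qs
  by (rule vs_qs)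

lemma sum_fun_apply: "sum f S x = (\<Sum>y\<in>S. f y x)"
  by (induct S rule: infinite_finite_induct) auto

definition toQ :: "('a \<Rightarrow> int) \<Rightarrow> 'a \<Rightarrow> rat" where
  "toQ f = (\<lambda>x. of_int (f x))"

lemma toQ_inj: "inj toQ"
proof (rule injI)
  fix f g :: "'a \<Rightarrow> int" assume "toQ f = toQ g"
  then have "\<And>x. (of_int (f x) :: rat) = of_int (g x)" unfolding toQ_def by meson
  then show "f = g" by (simp add: fun_eq_iff)
qed

lemma toQ_eq_iff [simp]: "toQ f = toQ g \<longleftrightarrow> f = g"
  using toQ_inj by (auto dest: injD)

lemma toQ_zero [simp]: "toQ (\<lambda>_. 0) = 0"
  by (simp add: toQ_def fun_eq_iff)

lemma toQ_combo: "toQ (\<lambda>x. \<Sum>y\<in>S. a y * y x) = (\<Sum>y\<in>S. qs (of_int (a y)) (toQ y))"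
  by (simp add: toQ_def fun_eq_iff sum_fun_apply)

definition delta :: "'a \<Rightarrow> 'a \<Rightarrow> rat" where
  "delta x = (\<lambda>y. if y = x then 1 else 0)"

definition supp_in :: "'a set \<Rightarrow> ('a \<Rightarrow> rat) set" where
  "supp_in F = {g. \<forall>x. g x \<noteq> 0 \<longrightarrow> x \<in> F}"

lemma delta_inj: "inj delta"
proof (rule injI)
  fix x y :: 'a assume "delta x = delta y"
  then have "delta x x = delta y x" by simp
  then show "x = y" unfolding delta_def by (auto split: if_splits)
qed

lemma supp_expand:
  assumes F: "finite F" and g: "g \<in> supp_in F"
  shows "g = (\<Sum>x\<in>F. qs (g x) (delta x))"
proof
  fix y
  have "(\<Sum>x\<in>F. qs (g x) (delta x)) y = (\<Sum>x\<in>F. if y = x then g x else 0)"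
    unfolding sum_fun_apply by (rule sum.cong) (auto simp: delta_def)
  also have "\<dots> = g y" using F g unfolding supp_in_def by (auto simp: sum.delta)
  finally show "g y = (\<Sum>x\<in>F. qs (g x) (delta x)) y" by simp
qed

lemma supp_in_span:
  assumes F: "finite F" and g: "g \<in> supp_in F"
  shows "g \<in> Q.span (delta ` F)"
proof -
  have "(\<Sum>x\<in>F. qs (g x) (delta x)) \<in> Q.span (delta ` F)"
    by (intro Q.span_sum Q.span_scale Q.span_base) auto
  then show ?thesis using supp_expand[OF F g] by simp
qed

lemma subspace_supp: "Q.subspace (supp_in F)"
  unfolding Q.subspace_def supp_in_def
proof (intro conjI allI impI ballI)
  fix x y :: "'a \<Rightarrow> rat" and a
  assume x: "x \<in> {g. \<forall>x. g x \<noteq> 0 \<longrightarrow> x \<in> F}" and y: "y \<in> {g. \<forall>x. g x \<noteq> 0 \<longrightarrow> x \<in> F}"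
  show "x + y \<in> {g. \<forall>x. g x \<noteq> 0 \<longrightarrow> x \<in> F}"
  proof (intro CollectI allI impI)
    fix z assume "(x + y) z \<noteq> 0"
    then have "x z \<noteq> 0 \<or> y z \<noteq> 0" by auto
    then show "z \<in> F" using x y by blast
  qed
qed auto

lemma delta_supp: "x \<in> F \<Longrightarrow> delta x \<in> supp_in F"
  unfolding supp_in_def delta_def by auto

lemma indep_delta:
  assumes F: "finite F"
  shows "Q.independent (delta ` F)"
proof (rule Q.independent_if_scalars_zero)
  show "finite (delta ` F)" using F by simp
  fix f d assume sum0: "(\<Sum>x\<in>delta ` F. qs (f x) x) = 0" and d: "d \<in> delta ` F"
  then obtain y where y: "y \<in> F" "d = delta y" by blast
  have "(\<Sum>x\<in>delta ` F. qs (f x) x) y = (\<Sum>x\<in>F. qs (f (delta x)) (delta x)) y"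
    using sum.reindex[OF inj_on_subset[OF delta_inj subset_UNIV], of "\<lambda>x. qs (f x) x" F] by simp
  also have "\<dots> = (\<Sum>x\<in>F. if y = x then f (delta x) else 0)"
    unfolding sum_fun_apply by (rule sum.cong) (auto simp: delta_def)
  also have "\<dots> = f (delta y)" using F y by (simp add: sum.delta)
  finally show "f d = 0" using sum0 y by simp
qed

lemma dim_supp:
  assumes F: "finite F"
  shows "Q.dim (supp_in F) = card F"
proof -
  have "card (delta ` F) = Q.dim (supp_in F)"
    by (rule Q.basis_card_eq_dim) (auto simp: delta_supp supp_in_span[OF F] indep_delta[OF F])
  moreover have "card (delta ` F) = card F"
    using card_image[OF inj_on_subset[OF delta_inj subset_UNIV]] by simp
  ultimately show ?thesis by simp
qed


lemma clear_denoms: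
  assumes "finite (Y :: rat set)"
  shows "\<exists>D::int. D > 0 \<and> (\<forall>q\<in>Y. \<exists>n::int. of_int D * q = of_int n)"
  using assms
proof (induct Y rule: finite_induct)
  case empty
  then show ?case by (intro exI[of _ 1]) simp
next
  case (insert q Y)
  then obtain D where D: "D > 0" "\<forall>q\<in>Y. \<exists>n::int. of_int D * q = of_int n" by blast
  obtain a b where ab: "quotient_of q = (a, b)" by (cases "quotient_of q")
  have b: "b > 0" using quotient_of_denom_pos[OF ab] .
  have q: "q = of_int a / of_int b" using quotient_of_div[OF ab] .
  show ?case
  proof (rule exI[of _ "D * b"], intro conjI ballI)
    show "D * b > 0" using D b by simp
    fix r assume "r \<in> insert q Y"
    then consider "r = q" | "r \<in> Y" by blast
    then show "\<exists>n::int. of_int (D * b) * r = of_int n"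
    proof cases
      case 1
      have "of_int (D * b) * r = (of_int (D * a) :: rat)" using 1 q b by simp
      then show ?thesis by blast
    next
      case 2
      then obtain n where "of_int D * r = (of_int n :: rat)" using D by blast
      then have "of_int (D * b) * r = (of_int (n * b) :: rat)" by (simp add: algebra_simps)
      then show ?thesis by blast
    qed
  qed
qed

lemma clear_fun:
  assumes F: "finite F" and g: "g \<in> supp_in F"
  shows "\<exists>D::int. D > 0 \<and> (\<exists>h. toQ h = qs (of_int D) g \<and> (\<forall>x. h x \<noteq> 0 \<longrightarrow> x \<in> F))"
proof -
  obtain D :: int where D: "D > 0" "\<forall>q\<in>g ` F. \<exists>n::int. of_int D * q = of_int n"
    using clear_denoms[of "g ` F"] F by auto
  define h where "h x = (if x \<in> F then (SOME n::int. of_int D * g x = of_int n) else 0)" for x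
  have "toQ h = qs (of_int D) g"
  proof
    fix x
    show "toQ h x = qs (of_int D) g x"
    proof (cases "x \<in> F")
      case True
      then have "\<exists>n::int. of_int D * g x = of_int n" using D by blast
      then have "of_int D * g x = of_int (SOME n::int. of_int D * g x = of_int n)" by (rule someI_ex)
      then show ?thesis unfolding toQ_def h_def using True by simp
    next
      case False
      then have "g x = 0" using g unfolding supp_in_def by blast
      then show ?thesis unfolding toQ_def h_def using False by simp
    qed
  qed
  moreover have "\<forall>x. h x \<noteq> 0 \<longrightarrow> x \<in> F" unfolding h_def by auto
  ultimately show ?thesis using D by blast
qed

lemma indep_combo:
  assumes ind: "Q.independent (T \<union> BB)" and disj: "T \<inter> BB = {}" and fT: "finite T" and fB: "finite BB"
    and sp: "(\<Sum>t\<in>T. qs (u t) t) \<in> Q.span BB"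
  shows "\<forall>t\<in>T. u t = 0"
proof -
  obtain w where w: "(\<Sum>t\<in>T. qs (u t) t) = (\<Sum>b\<in>BB. qs (w b) b)"
    using sp Q.span_finite[OF fB] by blast
  define f where "f x = (if x \<in> T then u x else - w x)" for x
  have "(\<Sum>x\<in>T \<union> BB. qs (f x) x) = (\<Sum>x\<in>T. qs (f x) x) + (\<Sum>x\<in>BB. qs (f x) x)"
    by (rule sum.union_disjoint[OF fT fB disj])
  also have "(\<Sum>x\<in>T. qs (f x) x) = (\<Sum>t\<in>T. qs (u t) t)" unfolding f_def by simp
  also have "(\<Sum>x\<in>BB. qs (f x) x) = (\<Sum>b\<in>BB. qs (- w b) b)"
    unfolding f_def using disj by (intro sum.cong) auto
  also have "\<dots> = - (\<Sum>b\<in>BB. qs (w b) b)"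
    by (simp add: Q.scale_minus_left sum_negf)
  finally have "(\<Sum>x\<in>T \<union> BB. qs (f x) x) = (\<Sum>b\<in>BB. qs (w b) b) + - (\<Sum>b\<in>BB. qs (w b) b)"
    unfolding w .
  then have z: "(\<Sum>x\<in>T \<union> BB. qs (f x) x) = 0" by (simp only: add.right_inverse)
  show ?thesis
  proof
    fix t assume t: "t \<in> T"
    have "f t = 0" using Q.independentD[OF ind _ subset_refl z] fT fB t by simp
    then show "u t = 0" unfolding f_def using t by simp
  qed
qed


lemma qs_sum_scale: "qs c (\<Sum>t\<in>T. qs (u t) t) = (\<Sum>t\<in>T. qs (c * u t) t)"
  by (simp add: Q.scale_sum_right)

lemma quot_rank_eq:
  fixes A B :: "('a \<Rightarrow> int) set" and F :: "'a set"
  assumes F: "finite F" and BA: "B \<subseteq> A" and AF: "\<forall>a\<in>A. \<forall>x. a x \<noteq> 0 \<longrightarrow> x \<in> F"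
    and PB: "\<forall>v \<in> Q.span (toQ ` B). \<exists>D::int. D > 0 \<and> (\<exists>b\<in>B. toQ b = qs (of_int D) v)"
  shows "quot_rank A B = Q.dim (toQ ` A) - Q.dim (toQ ` B) \<and> Q.dim (toQ ` B) \<le> Q.dim (toQ ` A)"
proof -
  let ?WA = "toQ ` A" and ?WB = "toQ ` B"
  have WAF: "?WA \<subseteq> Q.span (delta ` F)"
  proof
    fix g assume "g \<in> ?WA"
    then obtain a where a: "a \<in> A" "g = toQ a" by blast
    have "g \<in> supp_in F" unfolding supp_in_def a(2) toQ_def using AF a(1) by auto
    then show "g \<in> Q.span (delta ` F)" by (rule supp_in_span[OF F])
  qed
  have fD: "finite (delta ` F)" using F by simp
  obtain BB where BB: "BB \<subseteq> ?WB" "Q.independent BB" "?WB \<subseteq> Q.span BB"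
    using Q.maximal_independent_subset[of ?WB] by blast
  have dB: "card BB = Q.dim ?WB" using Q.basis_card_eq_dim[OF BB(1) BB(3) BB(2)] .
  have BBA: "BB \<subseteq> ?WA" using BB(1) BA by blast
  obtain BA' where BA': "BB \<subseteq> BA'" "BA' \<subseteq> ?WA" "Q.independent BA'" "?WA \<subseteq> Q.span BA'"
    using Q.maximal_independent_subset_extend[OF BBA BB(2)] by blast
  have dA: "card BA' = Q.dim ?WA" using Q.basis_card_eq_dim[OF BA'(2) BA'(4) BA'(3)] .
  have fBA: "finite BA'" using Q.independent_span_bound[OF fD BA'(3)] BA'(2) WAF by blast
  have fBB: "finite BB" using fBA BA'(1) finite_subset by blast
  have le: "Q.dim ?WB \<le> Q.dim ?WA" using dA dB card_mono[OF fBA BA'(1)] by simp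
  have spanBB: "Q.span BB = Q.span ?WB"
    unfolding Q.span_eq using BB(1,3) Q.span_superset by blast
  define T where "T = BA' - BB"
  have cT: "card T = Q.dim ?WA - Q.dim ?WB"
    unfolding T_def using card_Diff_subset[OF fBB BA'(1)] dA dB by simp
  have fT: "finite T" unfolding T_def using fBA by simp
  define P where "P S \<longleftrightarrow> (\<forall>a :: ('a \<Rightarrow> int) \<Rightarrow> int. (\<lambda>T. \<Sum>x\<in>S. a x * x T) \<in> B \<longrightarrow> (\<forall>x\<in>S. a x = 0))" for S
  define K where "K = {card S | S. finite S \<and> S \<subseteq> A \<and> P S}"
  have qr: "quot_rank A B = Max K" unfolding quot_rank_def K_def P_def by simp
  have upper: "card S \<le> card T" if S: "finite S" "S \<subseteq> A" "P S" for S
  proof -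
    let ?TS = "toQ ` S"
    have injS: "inj_on toQ S" using toQ_inj by (rule inj_on_subset) simp
    have cTS: "card ?TS = card S" using card_image[OF injS] .
    have fTS: "finite ?TS" using S(1) by simp
    have KC: "\<forall>t\<in>?TS. u t = 0" if sp: "(\<Sum>t\<in>?TS. qs (u t) t) \<in> Q.span BB" for u
    proof -
      obtain D :: int where D: "D > 0" "\<forall>q\<in>u ` ?TS. \<exists>n::int. of_int D * q = of_int n"
        using clear_denoms[of "u ` ?TS"] fTS by auto
      define n where "n t = (SOME k::int. of_int D * u t = of_int k)" for t
      have nt: "of_int D * u t = of_int (n t)" if "t \<in> ?TS" for t
      proof -
        have "\<exists>k::int. of_int D * u t = of_int k" using D that by blast
        then show ?thesis unfolding n_def by (rule someI_ex)
      qed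
      have "qs (of_int D) (\<Sum>t\<in>?TS. qs (u t) t) = (\<Sum>t\<in>?TS. qs (of_int (n t)) t)"
        unfolding qs_sum_scale by (rule sum.cong) (simp_all add: nt)
      moreover have "qs (of_int D) (\<Sum>t\<in>?TS. qs (u t) t) \<in> Q.span ?WB"
        using Q.span_scale[OF sp] spanBB by simp
      ultimately have "(\<Sum>t\<in>?TS. qs (of_int (n t)) t) \<in> Q.span ?WB" by simp
      then obtain D' :: int and b where D': "D' > 0" "b \<in> B"
        "toQ b = qs (of_int D') (\<Sum>t\<in>?TS. qs (of_int (n t)) t)"
        using PB by blast
      define a where "a y = D' * n (toQ y)" for y
      have "toQ (\<lambda>x. \<Sum>y\<in>S. a y * y x) = (\<Sum>y\<in>S. qs (of_int (a y)) (toQ y))" by (rule toQ_combo)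
      also have "\<dots> = (\<Sum>t\<in>?TS. qs (of_int (D' * n t)) t)"
        unfolding a_def using sum.reindex[OF injS, of "\<lambda>t. qs (of_int (D' * n t)) t"] by simp
      also have "\<dots> = toQ b" unfolding D'(3) qs_sum_scale by simp
      finally have "(\<lambda>x. \<Sum>y\<in>S. a y * y x) = b" by simp
      then have "(\<lambda>x. \<Sum>y\<in>S. a y * y x) \<in> B" using D'(2) by simp
      then have a0: "\<forall>y\<in>S. a y = 0" using S(3) unfolding P_def by blast
      show ?thesis
      proof
        fix t assume t: "t \<in> ?TS"
        then obtain y where y: "y \<in> S" "t = toQ y" by blast
        have "a y = 0" using a0 y(1) by blast
        then have "D' * n t = 0" unfolding a_def y(2) .
        then have "n t = 0" using D'(1) by simp
        then have "of_int D * u t = 0" using nt[OF t] by simp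
        then show "u t = 0" using D(1) by simp
      qed
    qed
    have disj: "?TS \<inter> BB = {}"
    proof (rule ccontr)
      assume "?TS \<inter> BB \<noteq> {}"
      then obtain t where t: "t \<in> ?TS" "t \<in> BB" by blast
      define u where "u t' = (if t' = t then 1 else (0::rat))" for t'
      have "(\<Sum>t'\<in>?TS. qs (u t') t') = (\<Sum>t'\<in>?TS. if t' = t then t' else 0)"
        unfolding u_def by (rule sum.cong) (auto simp: qs_def)
      also have "\<dots> = t" using t(1) fTS by (simp add: sum.delta')
      finally have "(\<Sum>t'\<in>?TS. qs (u t') t') \<in> Q.span BB" using t(2) Q.span_base by simp
      then have "u t = 0" using KC t(1) by blast
      then show False unfolding u_def by simp
    qed
    have indU: "Q.independent (?TS \<union> BB)"
    proof (rule Q.independent_if_scalars_zero)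
      show "finite (?TS \<union> BB)" using fTS fBB by simp
      fix f x assume z: "(\<Sum>x\<in>?TS \<union> BB. qs (f x) x) = 0" and x: "x \<in> ?TS \<union> BB"
      have split: "(\<Sum>x\<in>?TS \<union> BB. qs (f x) x) = (\<Sum>x\<in>?TS. qs (f x) x) + (\<Sum>x\<in>BB. qs (f x) x)"
        by (rule sum.union_disjoint[OF fTS fBB disj])
      have eqn: "(\<Sum>x\<in>?TS. qs (f x) x) = - (\<Sum>x\<in>BB. qs (f x) x)"
        using z split by (simp add: eq_neg_iff_add_eq_0)
      have "- (\<Sum>x\<in>BB. qs (f x) x) \<in> Q.span BB"
        by (intro Q.span_neg Q.span_sum Q.span_scale Q.span_base)
      then have "\<forall>t\<in>?TS. f t = 0" using KC eqn by simp
      then have "(\<Sum>x\<in>?TS. qs (f x) x) = 0" by (intro sum.neutral ballI) auto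
      then have zB: "(\<Sum>x\<in>BB. qs (f x) x) = 0" using eqn by simp
      show "f x = 0"
      proof (cases "x \<in> ?TS")
        case True
        then show ?thesis using \<open>\<forall>t\<in>?TS. f t = 0\<close> by blast
      next
        case False
        then have "x \<in> BB" using x by simp
        then show ?thesis using Q.independentD[OF BB(2) fBB subset_refl zB] by simp
      qed
    qed
    have "?TS \<subseteq> ?WA" using S(2) by blast
    then have "?TS \<subseteq> Q.span BA'" using BA'(4) by blast
    moreover have "BB \<subseteq> Q.span BA'" using BA'(1) Q.span_superset[of BA'] by blast
    ultimately have "?TS \<union> BB \<subseteq> Q.span BA'" by blast
    then have "card (?TS \<union> BB) \<le> card BA'"
      using Q.independent_span_bound[OF fBA indU] by simp
    moreover have "card (?TS \<union> BB) = card ?TS + card BB"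
      using card_Un_disjoint[OF fTS fBB disj] .
    ultimately show "card S \<le> card T"
      unfolding T_def using cTS card_Diff_subset[OF fBB BA'(1)] by simp
  qed
  define S0 where "S0 = {a \<in> A. toQ a \<in> T}"
  have TWA: "T \<subseteq> ?WA" unfolding T_def using BA'(2) by blast
  have imS0: "toQ ` S0 = T" unfolding S0_def using TWA by blast
  have injS0: "inj_on toQ S0" using toQ_inj by (rule inj_on_subset) simp
  have cS0: "card S0 = card T" using card_image[OF injS0] imS0 by simp
  have fS0: "finite S0" using finite_imageD[of toQ S0] imS0 fT injS0 by simp
  have PS0: "P S0"
    unfolding P_def
  proof (intro allI impI)
    fix a :: "('a \<Rightarrow> int) \<Rightarrow> int"
    assume inB: "(\<lambda>T. \<Sum>x\<in>S0. a x * x T) \<in> B"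
    define u where "u t = (of_int (a (the_inv_into S0 toQ t)) :: rat)" for t
    have "toQ (\<lambda>T. \<Sum>x\<in>S0. a x * x T) = (\<Sum>y\<in>S0. qs (of_int (a y)) (toQ y))" by (rule toQ_combo)
    also have "\<dots> = (\<Sum>y\<in>S0. qs (u (toQ y)) (toQ y))"
      unfolding u_def by (rule sum.cong) (simp_all add: the_inv_into_f_f[OF injS0])
    also have "\<dots> = (\<Sum>t\<in>T. qs (u t) t)"
      using sum.reindex[OF injS0, of "\<lambda>t. qs (u t) t"] imS0 by simp
    finally have eqT: "toQ (\<lambda>T. \<Sum>x\<in>S0. a x * x T) = (\<Sum>t\<in>T. qs (u t) t)" .
    have "toQ (\<lambda>T. \<Sum>x\<in>S0. a x * x T) \<in> ?WB" using inB by (rule imageI)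
    then have "(\<Sum>t\<in>T. qs (u t) t) \<in> ?WB" unfolding eqT .
    then have sp: "(\<Sum>t\<in>T. qs (u t) t) \<in> Q.span BB" using BB(3) by blast
    have TBB: "T \<union> BB = BA'" unfolding T_def using BA'(1) by blast
    have dj: "T \<inter> BB = {}" unfolding T_def by blast
    have "\<forall>t\<in>T. u t = 0"
      by (rule indep_combo[OF _ dj fT fBB sp]) (simp add: TBB BA'(3))
    then show "\<forall>x\<in>S0. a x = 0"
    proof (intro ballI)
      fix x assume u0: "\<forall>t\<in>T. u t = 0" and x: "x \<in> S0"
      have "toQ x \<in> T" using x imS0 by blast
      then have "u (toQ x) = 0" using u0 by blast
      then show "a x = 0" unfolding u_def using the_inv_into_f_f[OF injS0 x] by simp
    qed
  qed
  have finK: "finite K"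
  proof (rule finite_subset[of K "{..card T}"])
    show "K \<subseteq> {..card T}" unfolding K_def using upper by auto
  qed simp
  have "Max K = card T"
  proof (rule Max_eqI[OF finK])
    show "\<And>y. y \<in> K \<Longrightarrow> y \<le> card T" unfolding K_def using upper by auto
    have "S0 \<subseteq> A" unfolding S0_def by blast
    then have "finite S0 \<and> S0 \<subseteq> A \<and> P S0" using fS0 PS0 by blast
    then have "card S0 \<in> K" unfolding K_def by blast
    then show "card T \<in> K" using cS0 by simp
  qed
  then show ?thesis using qr cT le by simp
qed


lemma rank_nullity:
  fixes L :: "('a \<Rightarrow> rat) \<Rightarrow> ('a \<Rightarrow> rat)"
  assumes add: "\<And>x y. L (x + y) = L x + L y" and sc: "\<And>c x. L (qs c x) = qs c (L x)"
    and W: "Q.subspace W" and G: "finite G" "W \<subseteq> Q.span G"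
  shows "Q.dim W = Q.dim {w\<in>W. L w = 0} + Q.dim (L ` W)"
proof -
  have hom: "module_hom qs qs L"
    unfolding module_hom_iff using add sc Q.module_axioms by blast
  let ?K = "{w\<in>W. L w = 0}"
  obtain BK where BK: "BK \<subseteq> ?K" "Q.independent BK" "?K \<subseteq> Q.span BK"
    using Q.maximal_independent_subset[of ?K] by blast
  have BKW: "BK \<subseteq> W" using BK(1) by blast
  obtain BW where BW: "BK \<subseteq> BW" "BW \<subseteq> W" "Q.independent BW" "W \<subseteq> Q.span BW"
    using Q.maximal_independent_subset_extend[OF BKW BK(2)] by blast
  have fBW: "finite BW" using Q.independent_span_bound[OF G(1) BW(3)] BW(2) G(2) by blast
  have fBK: "finite BK" using fBW BW(1) finite_subset by blast
  define T where "T = BW - BK"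
  have fT: "finite T" unfolding T_def using fBW by simp
  have TBK: "T \<union> BK = BW" unfolding T_def using BW(1) by blast
  have dj: "T \<inter> BK = {}" unfolding T_def by blast
  have TW: "T \<subseteq> W" unfolding T_def using BW(2) by blast
  have dW: "Q.dim W = card BW" using Q.basis_card_eq_dim[OF BW(2) BW(4) BW(3)] by simp
  have dK: "Q.dim ?K = card BK" using Q.basis_card_eq_dim[OF BK(1) BK(3) BK(2)] by simp
  have cBW: "card BW = card T + card BK"
    using card_Un_disjoint[OF fT fBK dj] TBK by simp
  have spTW: "Q.span T \<subseteq> W" using Q.span_minimal[OF TW W] .
  have key: "x = 0" if x: "x \<in> Q.span T" and Lx: "L x = 0" for x
  proof -
    obtain u where u: "x = (\<Sum>t\<in>T. qs (u t) t)" using x Q.span_finite[OF fT] by blast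
    have "x \<in> ?K" using spTW x Lx by blast
    then have "x \<in> Q.span BK" using BK(3) by blast
    then have "\<forall>t\<in>T. u t = 0"
      using indep_combo[OF _ dj fT fBK] u TBK BW(3) by simp
    then show "x = 0" unfolding u by (intro sum.neutral ballI) auto
  qed
  have injS: "inj_on L (Q.span T)"
  proof (rule inj_onI)
    fix x y assume xy: "x \<in> Q.span T" "y \<in> Q.span T" "L x = L y"
    have "L (x - y) = L x - L y" using module_hom.diff[OF hom] by blast
    then have "L (x - y) = 0" using xy(3) by simp
    moreover have "x - y \<in> Q.span T" using Q.span_diff[OF xy(1,2)] .
    ultimately have "x - y = 0" using key by blast
    then show "x = y" by simp
  qed
  have indT: "Q.independent T" using Q.independent_mono[OF BW(3)] T_def by blast
  have indLT: "Q.independent (L ` T)"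
    using module_hom.independent_injective_image[OF hom indT injS] .
  have injT: "inj_on L T" using injS Q.span_superset[of T] inj_on_subset by blast
  have LTW: "L ` T \<subseteq> L ` W" using TW by blast
  have LWsp: "L ` W \<subseteq> Q.span (L ` T)"
  proof
    fix y assume "y \<in> L ` W"
    then obtain w where w: "w \<in> W" "y = L w" by blast
    have "w \<in> Q.span BW" using w(1) BW(4) by blast
    then have "L w \<in> L ` Q.span BW" by blast
    also have "\<dots> = Q.span (L ` BW)" using module_hom.span_image[OF hom, of BW] by simp
    also have "\<dots> \<subseteq> Q.span (L ` T)"
    proof (rule Q.span_minimal)
      show "L ` BW \<subseteq> Q.span (L ` T)"
      proof
        fix z assume "z \<in> L ` BW"
        then obtain b where b: "b \<in> BW" "z = L b" by blast
        show "z \<in> Q.span (L ` T)"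
        proof (cases "b \<in> T")
          case True
          then show ?thesis using b Q.span_base by blast
        next
          case False
          then have "b \<in> BK" using b(1) TBK by blast
          then have "L b = 0" using BK(1) by blast
          then show ?thesis using b(2) Q.span_zero by simp
        qed
      qed
      show "Q.subspace (Q.span (L ` T))" by simp
    qed
    finally show "y \<in> Q.span (L ` T)" using w(2) by simp
  qed
  have "card (L ` T) = Q.dim (L ` W)" using Q.basis_card_eq_dim[OF LTW LWsp indLT] .
  moreover have "card (L ` T) = card T" using card_image[OF injT] .
  ultimately show ?thesis using dW dK cBW by simp
qed


context gr
begin

lemma finite_states: "finite (states V es i j)"
proof (rule finite_subset[OF _ finite_allstates])
  show "states V es i j \<subseteq> AS" unfolding states_def by auto
qed

lemma states_AS: "S \<in> states V es i j \<Longrightarrow> S \<in> AS"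
  unfolding states_def by auto

lemma diffR_add: "diffR V es (f + g) = diffR V es f + diffR V es g"
proof
  fix T
  show "diffR V es (f + g) T = (diffR V es f + diffR V es g) T"
    unfolding diffR_AS plus_fun_apply sum.distrib[symmetric]
    by (intro sum.cong refl) (simp add: algebra_simps)
qed

lemma diffR_qs: "diffR V es (qs c f) = qs c (diffR V es f)"
proof
  fix T
  show "diffR V es (qs c f) T = qs c (diffR V es f) T"
    unfolding diffR_AS qs_apply sum_distrib_left
    by (intro sum.cong refl) (simp add: algebra_simps)
qed

lemma diffR_zero: "diffR V es (\<lambda>_. 0 :: 'r::comm_ring_1) = (\<lambda>_. 0)"
  unfolding diffR_def by (intro ext sum.neutral ballI) simp

lemma toQ_diff: "toQ (diff V es f) = diffR V es (toQ f)"
proof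
  fix T
  show "toQ (diff V es f) T = diffR V es (toQ f) T"
    unfolding diff_diffR toQ_def diffR_AS of_int_sum
    by (intro sum.cong refl) simp
qed

lemma diffR_supp:
  fixes f :: "'v state \<Rightarrow> 'r::comm_ring_1"
  assumes f: "\<forall>S. f S \<noteq> 0 \<longrightarrow> S \<in> states V es i j" and T: "diffR V es f T \<noteq> 0"
  shows "T \<in> states V es (Suc i) j"
proof (rule ccontr)
  assume nT: "T \<notin> states V es (Suc i) j"
  have "diffR V es f T = 0"
    unfolding diffR_AS
  proof (intro sum.neutral ballI)
    fix S e assume S: "S \<in> AS" and e: "e \<in> EE S"
    show "(if state_e V es S e = Some T then f S * (-1) ^ nbefore (fst S) e else 0) = 0"
    proof (cases "state_e V es S e = Some T \<and> f S \<noteq> 0")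
      case True
      then have Si: "S \<in> states V es i j" using f by blast
      obtain s X where S': "S = (s,X)" by (cases S)
      have "T \<in> states V es (Suc i) j"
        using state_e_valid(1)[of s X i j e T] Si S' e True by auto
      then show ?thesis using nT by simp
    next
      case False
      then show ?thesis by auto
    qed
  qed
  then show False using T by simp
qed

lemma diff_chains: "f \<in> chains V es i j \<Longrightarrow> diff V es f \<in> chains V es (Suc i) j"
  unfolding chains_def diff_diffR using diffR_supp by blast

lemma bnd_sub_cyc: "boundaries V es i j \<subseteq> cycles V es i j"
proof (cases i)
  case 0
  have "(\<lambda>_. 0) \<in> chains V es 0 j" unfolding chains_def by simp
  moreover have "diff V es (\<lambda>_. 0) = (\<lambda>_. 0)" unfolding diff_diffR by (rule diffR_zero)
  ultimately show ?thesis unfolding boundaries_def cycles_def using 0 by simp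
next
  case (Suc k)
  show ?thesis
  proof
    fix b assume "b \<in> boundaries V es i j"
    then obtain f where f: "f \<in> chains V es k j" "b = diff V es f"
      unfolding boundaries_def using Suc by auto
    have "b \<in> chains V es i j" using diff_chains[OF f(1)] f(2) Suc by simp
    moreover have "diff V es b = (\<lambda>_. 0)" unfolding f(2) diff_diffR by (rule diffR_diffR)
    ultimately show "b \<in> cycles V es i j" unfolding cycles_def by simp
  qed
qed

abbreviation "cQ i j \<equiv> supp_in (states V es i j)"

lemma toQ_chains: "f \<in> chains V es i j \<Longrightarrow> toQ f \<in> cQ i j"
  unfolding chains_def supp_in_def toQ_def by auto

lemma span_chains: "Q.span (toQ ` chains V es i j) = cQ i j"
proof
  show "Q.span (toQ ` chains V es i j) \<subseteq> cQ i j"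
    by (rule Q.span_minimal) (auto simp: toQ_chains subspace_supp)
  show "cQ i j \<subseteq> Q.span (toQ ` chains V es i j)"
  proof
    fix g assume g: "g \<in> cQ i j"
    have "delta ` states V es i j \<subseteq> toQ ` chains V es i j"
    proof
      fix d assume "d \<in> delta ` states V es i j"
      then obtain x where x: "x \<in> states V es i j" "d = delta x" by blast
      define h where "h y = (if y = x then 1 else (0::int))" for y
      have "h \<in> chains V es i j" unfolding chains_def h_def using x by auto
      moreover have "toQ h = d" unfolding x(2) h_def toQ_def delta_def by auto
      ultimately show "d \<in> toQ ` chains V es i j" by blast
    qed
    then have "Q.span (delta ` states V es i j) \<subseteq> Q.span (toQ ` chains V es i j)"
      by (rule Q.span_mono)
    then show "g \<in> Q.span (toQ ` chains V es i j)"
      using supp_in_span[OF finite_states g] by blast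
  qed
qed

lemma span_cycles: "Q.span (toQ ` cycles V es i j) = {g \<in> cQ i j. diffR V es g = 0}"
proof
  show "Q.span (toQ ` cycles V es i j) \<subseteq> {g \<in> cQ i j. diffR V es g = 0}"
  proof (rule Q.span_minimal)
    show "toQ ` cycles V es i j \<subseteq> {g \<in> cQ i j. diffR V es g = 0}"
    proof
      fix g assume "g \<in> toQ ` cycles V es i j"
      then obtain z where z: "z \<in> cycles V es i j" "g = toQ z" by blast
      have "diffR V es g = toQ (diff V es z)" unfolding z(2) toQ_diff ..
      also have "\<dots> = 0" using z(1) unfolding cycles_def by simp
      finally show "g \<in> {g \<in> cQ i j. diffR V es g = 0}"
        using z toQ_chains unfolding cycles_def by auto
    qed
    show "Q.subspace {g \<in> cQ i j. diffR V es g = 0}"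
      unfolding Q.subspace_def
    proof (intro conjI ballI allI)
      have "(0::'v state \<Rightarrow> rat) \<in> cQ i j" unfolding supp_in_def by simp
      moreover have "diffR V es (0::'v state \<Rightarrow> rat) = 0"
        using diffR_zero[where 'r = rat] by (simp add: zero_fun_def)
      ultimately show "0 \<in> {g \<in> cQ i j. diffR V es g = 0}" by simp
      fix x y c assume x: "x \<in> {g \<in> cQ i j. diffR V es g = 0}" and y: "y \<in> {g \<in> cQ i j. diffR V es g = 0}"
      show "x + y \<in> {g \<in> cQ i j. diffR V es g = 0}"
      proof -
        have "x + y \<in> cQ i j" using x y Q.subspace_add[OF subspace_supp] by blast
        moreover have "diffR V es (x + y) = diffR V es x + diffR V es y" by (rule diffR_add)
        then have "diffR V es (x + y) = 0" using x y by simp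
        ultimately show ?thesis by simp
      qed
      show "qs c x \<in> {g \<in> cQ i j. diffR V es g = 0}"
      proof -
        have "qs c x \<in> cQ i j" using x Q.subspace_scale[OF subspace_supp] by blast
        moreover have "diffR V es (qs c x) = qs c (diffR V es x)" by (rule diffR_qs)
        then have "diffR V es (qs c x) = 0" using x by (simp add: fun_eq_iff)
        ultimately show ?thesis by simp
      qed
    qed
  qed
  show "{g \<in> cQ i j. diffR V es g = 0} \<subseteq> Q.span (toQ ` cycles V es i j)"
  proof
    fix g assume g: "g \<in> {g \<in> cQ i j. diffR V es g = 0}"
    obtain D :: int and h where D: "D > 0" "toQ h = qs (of_int D) g" "\<forall>x. h x \<noteq> 0 \<longrightarrow> x \<in> states V es i j"
      using clear_fun[OF finite_states, of g] g by blast
    have hc: "h \<in> chains V es i j" unfolding chains_def using D(3) by blast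
    have "toQ (diff V es h) = qs (of_int D) (diffR V es g)" unfolding toQ_diff D(2) diffR_qs ..
    also have "\<dots> = 0" using g by simp
    finally have "diff V es h = (\<lambda>_. 0)" using toQ_zero toQ_eq_iff by metis
    then have "h \<in> cycles V es i j" using hc unfolding cycles_def by simp
    then have "toQ h \<in> Q.span (toQ ` cycles V es i j)" by (intro Q.span_base imageI)
    then have "qs (1 / of_int D) (toQ h) \<in> Q.span (toQ ` cycles V es i j)" by (rule Q.span_scale)
    moreover have "qs (1 / of_int D) (toQ h) = g" unfolding D(2) using D(1) by (simp add: fun_eq_iff)
    ultimately show "g \<in> Q.span (toQ ` cycles V es i j)" by simp
  qed
qed

lemma hom_diffR: "module_hom qs qs (diffR V es)"
  unfolding module_hom_iff using diffR_add diffR_qs Q.module_axioms by blast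

lemma span_bnd_Suc: "Q.span (toQ ` boundaries V es (Suc i) j) = diffR V es ` cQ i j"
proof -
  have "toQ ` boundaries V es (Suc i) j = diffR V es ` (toQ ` chains V es i j)"
    unfolding boundaries_def using toQ_diff by (auto simp: image_image)
  then have "Q.span (toQ ` boundaries V es (Suc i) j) = diffR V es ` Q.span (toQ ` chains V es i j)"
    using module_hom.span_image[OF hom_diffR] by simp
  then show ?thesis unfolding span_chains .
qed

lemma toQ_bnd0: "toQ ` boundaries V es 0 j = {0}"
  unfolding boundaries_def by simp

lemma dim_zero_set: "Q.dim {0 :: 'v state \<Rightarrow> rat} = 0"
proof -
  have "Q.dim {0 :: 'v state \<Rightarrow> rat} = card ({} :: ('v state \<Rightarrow> rat) set)"
    by (rule Q.dim_eq_card) (auto simp: Q.independent_empty)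
  then show ?thesis by simp
qed

lemma PB_bnd: "\<forall>v \<in> Q.span (toQ ` boundaries V es i j). \<exists>D::int. D > 0 \<and> (\<exists>b\<in>boundaries V es i j. toQ b = qs (of_int D) v)"
proof (cases i)
  case 0
  show ?thesis
  proof
    fix v assume "v \<in> Q.span (toQ ` boundaries V es i j)"
    then have "v = 0" unfolding 0 toQ_bnd0 by simp
    moreover have "(\<lambda>_. 0) \<in> boundaries V es i j" unfolding boundaries_def 0 by simp
    moreover have "toQ (\<lambda>_. 0) = qs (of_int 1) v" using \<open>v = 0\<close> by (simp add: fun_eq_iff toQ_def)
    ultimately show "\<exists>D::int. D > 0 \<and> (\<exists>b\<in>boundaries V es i j. toQ b = qs (of_int D) v)"
      using zero_less_one[where 'a=int] by blast
  qed
next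
  case (Suc k)
  show ?thesis
  proof
    fix v assume "v \<in> Q.span (toQ ` boundaries V es i j)"
    then obtain g where g: "g \<in> cQ k j" "v = diffR V es g" unfolding Suc span_bnd_Suc by blast
    obtain D :: int and h where D: "D > 0" "toQ h = qs (of_int D) g" "\<forall>x. h x \<noteq> 0 \<longrightarrow> x \<in> states V es k j"
      using clear_fun[OF finite_states g(1)] by blast
    have hc: "h \<in> chains V es k j" unfolding chains_def using D(3) by blast
    have "diff V es h \<in> boundaries V es i j" unfolding boundaries_def Suc using hc by simp
    moreover have "toQ (diff V es h) = qs (of_int D) v" unfolding toQ_diff D(2) diffR_qs g(2) ..
    ultimately show "\<exists>D::int. D > 0 \<and> (\<exists>b\<in>boundaries V es i j. toQ b = qs (of_int D) v)"
      using D(1) by blast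
  qed
qed

lemma hom_rank_dims:
  "hom_rank V es i j = Q.dim (toQ ` cycles V es i j) - Q.dim (toQ ` boundaries V es i j)
   \<and> Q.dim (toQ ` boundaries V es i j) \<le> Q.dim (toQ ` cycles V es i j)"
  unfolding hom_rank_def
proof (rule quot_rank_eq[OF finite_states[of i j] bnd_sub_cyc _ PB_bnd])
  show "\<forall>a\<in>cycles V es i j. \<forall>x. a x \<noteq> 0 \<longrightarrow> x \<in> states V es i j"
    unfolding cycles_def chains_def by blast
qed

lemma rank_nullity_ij:
  "Q.dim (toQ ` cycles V es i j) + Q.dim (toQ ` boundaries V es (Suc i) j) = card (states V es i j)"
proof -
  have "Q.dim (cQ i j) = Q.dim {w\<in>cQ i j. diffR V es w = 0} + Q.dim (diffR V es ` cQ i j)"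
  proof (rule rank_nullity[OF diffR_add diffR_qs subspace_supp])
    show "finite (delta ` states V es i j)" using finite_states by simp
    show "cQ i j \<subseteq> Q.span (delta ` states V es i j)"
      using supp_in_span[OF finite_states] by blast
  qed
  moreover have "Q.dim (cQ i j) = card (states V es i j)" by (rule dim_supp[OF finite_states])
  moreover have "Q.dim (toQ ` cycles V es i j) = Q.dim {w\<in>cQ i j. diffR V es w = 0}"
    using Q.dim_span[of "toQ ` cycles V es i j"] span_cycles by simp
  moreover have "Q.dim (toQ ` boundaries V es (Suc i) j) = Q.dim (diffR V es ` cQ i j)"
    using Q.dim_span[of "toQ ` boundaries V es (Suc i) j"] span_bnd_Suc by simp
  ultimately show ?thesis by simp
qed

lemma bnd0_dim: "Q.dim (toQ ` boundaries V es 0 j) = 0"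
  unfolding toQ_bnd0 by (rule dim_zero_set)

lemma bnd_top_dim: "Q.dim (toQ ` boundaries V es (Suc (length es)) j) = 0"
proof -
  have z: "diff V es f = (\<lambda>_. 0)" if f: "f \<in> chains V es (length es) j" for f
  proof
    fix T
    show "diff V es f T = 0"
      unfolding diff_diffR diffR_AS
    proof (intro sum.neutral ballI)
      fix S e assume S: "S \<in> AS" and e: "e \<in> EE S"
      show "(if state_e V es S e = Some T then f S * (-1) ^ nbefore (fst S) e else 0) = 0"
      proof (cases "f S = 0")
        case False
        then have "S \<in> states V es (length es) j" using f unfolding chains_def by blast
        then have "fst S \<subseteq> {..<length es}" "card (fst S) = length es" unfolding states_def by auto
        then have "fst S = {..<length es}" using card_subset_eq[of "{..<length es}" "fst S"] by simp
        then show ?thesis using e by simp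
      qed simp
    qed
  qed
  have "boundaries V es (Suc (length es)) j = {\<lambda>_. 0}"
  proof -
    have "(\<lambda>_. 0) \<in> chains V es (length es) j" unfolding chains_def by simp
    then show ?thesis unfolding boundaries_def using z by auto
  qed
  then have "toQ ` boundaries V es (Suc (length es)) j = {0}" by simp
  then show ?thesis using dim_zero_set by simp
qed

end


lemma telescope:
  fixes x :: "nat \<Rightarrow> int"
  shows "(\<Sum>i\<le>n. (-1)^i * (x i + x (Suc i))) = x 0 + (-1)^n * x (Suc n)"
proof (induct n)
  case 0
  then show ?case by simp
next
  case (Suc n)
  then show ?case by (simp add: algebra_simps)
qed

lemma smult_sum_right: "smult c (sum f S) = (\<Sum>x\<in>S. smult c (f x))"
  by (induct S rule: infinite_finite_induct) (simp_all add: smult_add_right)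

lemma swap_smult_monom:
  fixes g :: "nat \<Rightarrow> 'a::comm_ring_1"
  shows "(\<Sum>i\<in>I. smult (g i) (\<Sum>j\<in>J. monom (x i j) j)) = (\<Sum>j\<in>J. monom (\<Sum>i\<in>I. g i * x i j) j)"
proof -
  have "(\<Sum>i\<in>I. smult (g i) (\<Sum>j\<in>J. monom (x i j) j)) = (\<Sum>i\<in>I. \<Sum>j\<in>J. monom (g i * x i j) j)"
    by (simp add: smult_sum_right smult_monom)
  also have "\<dots> = (\<Sum>j\<in>J. \<Sum>i\<in>I. monom (g i * x i j) j)" by (rule sum.swap)
  also have "\<dots> = (\<Sum>j\<in>J. monom (\<Sum>i\<in>I. g i * x i j) j)" by (simp add: monom_sum)
  finally show ?thesis .
qed

lemma pcompose_monom: "pcompose (monom c n) q = smult c (q ^ n)"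
  for q :: "'a::comm_ring_1 poly"
proof (induct n)
  case 0
  then show ?case by (simp add: monom_0)
next
  case (Suc n)
  then show ?case by (simp add: monom_Suc pcompose_pCons mult_smult_right)
qed

lemma binom_pow:
  assumes "finite K"
  shows "(\<Sum>X\<in>Pow K. monom (1::int) (card X)) = [:1, 1:] ^ card K"
  using assms
proof (induct K rule: finite_induct)
  case empty
  then show ?case by (simp add: monom_0 one_pCons)
next
  case (insert k K)
  let ?P = "(\<Sum>X\<in>Pow K. monom (1::int) (card X))"
  have disj: "Pow K \<inter> insert k ` Pow K = {}" using insert.hyps by auto
  have inj: "inj_on (insert k) (Pow K)" using insert.hyps by (auto simp: inj_on_def)
  have "(\<Sum>X\<in>Pow (insert k K). monom (1::int) (card X))
      = ?P + (\<Sum>X\<in>insert k ` Pow K. monom (1::int) (card X))"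
    unfolding Pow_insert using insert.hyps disj by (intro sum.union_disjoint) auto
  also have "(\<Sum>X\<in>insert k ` Pow K. monom (1::int) (card X)) = (\<Sum>X\<in>Pow K. monom 1 (card (insert k X)))"
    using sum.reindex[OF inj] by simp
  also have "\<dots> = (\<Sum>X\<in>Pow K. [:0, 1:] * monom 1 (card X))"
  proof (rule sum.cong[OF refl])
    fix X assume "X \<in> Pow K"
    then have XK: "X \<subseteq> K" by simp
    then have "finite X" using insert.hyps(1) finite_subset by blast
    moreover have "k \<notin> X" using XK insert.hyps(2) by blast
    ultimately have "card (insert k X) = Suc (card X)" by simp
    then show "monom (1::int) (card (insert k X)) = [:0, 1:] * monom 1 (card X)"
      by (simp add: monom_Suc)
  qed
  also have "\<dots> = [:0, 1:] * ?P" by (simp add: sum_distrib_left)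
  finally have "(\<Sum>X\<in>Pow (insert k K). monom (1::int) (card X)) = ?P + [:0, 1:] * ?P" .
  also have "\<dots> = [:1, 1:] * ?P" by (simp add: algebra_simps one_pCons)
  finally show ?case using insert by simp
qed


context gr
begin

lemma euler_j:
  "(\<Sum>i\<le>length es. (-1)^i * int (hom_rank V es i j)) = (\<Sum>i\<le>length es. (-1)^i * int (card (states V es i j)))"
proof -
  define b where "b i = int (Q.dim (toQ ` boundaries V es i j))" for i
  have h: "int (hom_rank V es i j) = int (card (states V es i j)) - (b i + b (Suc i))" for i
  proof -
    have 1: "hom_rank V es i j = Q.dim (toQ ` cycles V es i j) - Q.dim (toQ ` boundaries V es i j)"
      and 2: "Q.dim (toQ ` boundaries V es i j) \<le> Q.dim (toQ ` cycles V es i j)"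
      using hom_rank_dims[of i j] by auto
    have 3: "Q.dim (toQ ` cycles V es i j) + Q.dim (toQ ` boundaries V es (Suc i) j) = card (states V es i j)"
      by (rule rank_nullity_ij)
    show ?thesis unfolding b_def 1 using 2 3 by linarith
  qed
  have "(\<Sum>i\<le>length es. (-1)^i * int (hom_rank V es i j))
      = (\<Sum>i\<le>length es. (-1)^i * int (card (states V es i j)) - (-1)^i * (b i + b (Suc i)))"
    unfolding h by (simp add: right_diff_distrib)
  also have "\<dots> = (\<Sum>i\<le>length es. (-1)^i * int (card (states V es i j))) - (\<Sum>i\<le>length es. (-1)^i * (b i + b (Suc i)))"
    by (rule sum_subtractf)
  also have "(\<Sum>i\<le>length es. (-1)^i * (b i + b (Suc i))) = b 0 + (-1)^(length es) * b (Suc (length es))"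
    by (rule telescope)
  also have "\<dots> = 0" unfolding b_def using bnd0_dim[of j] bnd_top_dim[of j] by simp
  finally show ?thesis by simp
qed

lemma poly_states_i:
  "(\<Sum>j\<le>card V. monom (int (card (states V es i j))) j)
     = (\<Sum>s\<in>{s\<in>Pow {..<length es}. card s = i}. [:1, 1:] ^ card (comps V es s))"
proof -
  let ?I = "{s\<in>Pow {..<length es}. card s = i}"
  let ?SI = "Sigma ?I (\<lambda>s. Pow (comps V es s))"
  have fI: "finite ?I" by simp
  have fSI: "finite ?SI" using fI finite_comps by simp
  have "(\<Sum>p\<in>?SI. monom (1::int) (card (snd p))) = (\<Sum>s\<in>?I. \<Sum>X\<in>Pow (comps V es s). monom (1::int) (card X))"
    using sum.Sigma[OF fI, of "\<lambda>s. Pow (comps V es s)" "\<lambda>s X. monom (1::int) (card X)"] finite_comps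
    by (simp add: case_prod_beta')
  also have "\<dots> = (\<Sum>s\<in>?I. [:1, 1:] ^ card (comps V es s))"
    using binom_pow[OF finite_comps] by simp
  finally have A: "(\<Sum>p\<in>?SI. monom (1::int) (card (snd p))) = (\<Sum>s\<in>?I. [:1, 1:] ^ card (comps V es s))" .
  have img: "(\<lambda>p. card (snd p)) ` ?SI \<subseteq> {..card V}"
  proof
    fix y assume "y \<in> (\<lambda>p. card (snd p)) ` ?SI"
    then obtain s X where p: "s \<in> ?I" "X \<subseteq> comps V es s" "y = card X" by auto
    have "card X \<le> card (comps V es s)" using card_mono[OF finite_comps p(2)] .
    then show "y \<in> {..card V}" using card_comps[of s] p(3) by simp
  qed
  have G: "(\<Sum>j\<le>card V. \<Sum>p\<in>{p. p \<in> ?SI \<and> card (snd p) = j}. monom (1::int) (card (snd p)))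
      = (\<Sum>p\<in>?SI. monom (1::int) (card (snd p)))"
    by (rule sum.group[OF fSI _ img]) simp
  have E: "{p. p \<in> ?SI \<and> card (snd p) = j} = states V es i j" for j
    unfolding states_def by auto
  have B: "(\<Sum>j\<le>card V. \<Sum>p\<in>states V es i j. monom (1::int) (card (snd p)))
      = (\<Sum>p\<in>?SI. monom (1::int) (card (snd p)))" using G by (simp only: E)
  have C: "(\<Sum>p\<in>states V es i j. monom (1::int) (card (snd p))) = monom (int (card (states V es i j))) j" for j
  proof -
    have "(\<Sum>p\<in>states V es i j. monom (1::int) (card (snd p))) = (\<Sum>p\<in>states V es i j. monom (1::int) j)"
      unfolding states_def by (rule sum.cong) auto
    also have "\<dots> = monom (\<Sum>p\<in>states V es i j. (1::int)) j" by (simp only: monom_sum)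
    also have "\<dots> = monom (int (card (states V es i j))) j" by simp
    finally show ?thesis .
  qed
  show ?thesis using A B C by simp
qed

end

theorem mainTheorem2:
  fixes V :: "'v set" and es :: "('v \<times> 'v) list"
  assumes "finite V" and "set es \<subseteq> V \<times> V"
  shows "(\<Sum>i\<le>length es. smult ((-1) ^ i) (qdim_H V es i))
           = pcompose (chromatic_poly V es) [:1, 1:]"
proof -
  interpret gr V es using assms by unfold_locales
  let ?m = "length es" and ?N = "card V"
  let ?k = "\<lambda>s. card (comps V es s)"
  have "(\<Sum>i\<le>?m. smult ((-1) ^ i) (qdim_H V es i))
      = (\<Sum>i\<le>?m. smult ((-1) ^ i) (\<Sum>j\<le>?N. monom (int (hom_rank V es i j)) j))"
    unfolding qdim_H_def ..
  also have "\<dots> = (\<Sum>j\<le>?N. monom (\<Sum>i\<le>?m. (-1) ^ i * int (hom_rank V es i j)) j)"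
    by (rule swap_smult_monom)
  also have "\<dots> = (\<Sum>j\<le>?N. monom (\<Sum>i\<le>?m. (-1) ^ i * int (card (states V es i j))) j)"
    using euler_j by simp
  also have "\<dots> = (\<Sum>i\<le>?m. smult ((-1) ^ i) (\<Sum>j\<le>?N. monom (int (card (states V es i j))) j))"
    by (rule swap_smult_monom[symmetric])
  also have "\<dots> = (\<Sum>i\<le>?m. smult ((-1) ^ i) (\<Sum>s\<in>{s\<in>Pow {..<?m}. card s = i}. [:1, 1:] ^ ?k s))"
    using poly_states_i by simp
  also have "\<dots> = (\<Sum>i\<le>?m. \<Sum>s\<in>{s. s \<in> Pow {..<?m} \<and> card s = i}. smult ((-1) ^ card s) ([:1, 1:] ^ ?k s))"
    by (rule sum.cong[OF refl]) (simp add: smult_sum_right)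
  also have "\<dots> = (\<Sum>s\<in>Pow {..<?m}. smult ((-1) ^ card s) ([:1, 1:] ^ ?k s))"
  proof (rule sum.group)
    show "card ` Pow {..<?m} \<subseteq> {..?m}"
    proof
      fix y assume "y \<in> card ` Pow {..<?m}"
      then obtain s where "s \<subseteq> {..<?m}" "y = card s" by auto
      then show "y \<in> {..?m}" using card_mono[of "{..<?m}" s] by simp
    qed
  qed simp_all
  also have "\<dots> = pcompose (chromatic_poly V es) [:1, 1:]"
    unfolding chromatic_poly_def pcompose_sum pcompose_monom ..
  finally show ?thesis .
qed


end
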